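(* If $M$ is a term of $\ell\Lambda_\infty^{4S}$ and $M\leadsto N\to_0 L$, then there is a term $P$ of $\ell\Lambda_\infty^{4S}$ such that $M\to_0 P\leadsto L$.
   Context: Preterms: possibly infinite trees generated by $M ::= x \mid MN \mid \lambda x.M \mid \lambda^{\downarrow}x.M \mid \lambda^{\uparrow}x.M \mid \downarrow M \mid \uparrow M$ ($\downarrow M$ inductive box, $\uparrow M$ coinductive box); substitution is capture-avoiding. Patterns: $x,\downarrow x,\uparrow x,\#x,\dagger x$; environments: finite sets of patterns, each variable in at most one; $\Theta,\Xi,\Psi,\Phi$ linear environments with marked versions $\#\Theta$ etc.; $\Upsilon,\Pi$ environments with only patterns $y$, $\downarrow y$; commas are disjoint unions. A term of $\ell\Lambda_\infty^{4S}$ is a preterm $M$ with $\Gamma\vdash M$ derivable for some $\Gamma$ by: (vl) $\#\Theta,\uparrow\Xi,\dagger\Psi,x\vdash x$; (vd) $\#\Theta,\uparrow\Xi,\dagger\Psi,\#x\vdash x$; (va) $\#\Theta,\uparrow\Xi,\dagger\Psi,\dagger x\vdash x$; (a) from $\Upsilon,\#\Theta,\uparrow\Xi,\dagger\Psi\vdash M$ and $\Pi,\#\Theta,\uparrow\Xi,\dagger\Psi\vdash N$ infer $\Upsilon,\Pi,\#\Theta,\uparrow\Xi,\dagger\Psi\vdash MN$; (ll) $\Gamma,x\vdash M$ gives $\Gamma\vdash\lambda x.M$; (li)$_1$ $\Gamma,\#x\vdash M$ gives $\Gamma\vdash\lambda^\downarrow x.M$; (li)$_2$ $\Gamma,\downarrow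 x\vdash M$ gives $\Gamma\vdash\lambda^\downarrow x.M$; (lc) $\Gamma,\uparrow x\vdash M$ gives $\Gamma\vdash\lambda^\uparrow x.M$; (mi) from $\Xi,\uparrow\Psi,\dagger\Phi\vdash M$ infer $\#\Theta,\downarrow\Xi,\uparrow\Psi,\dagger\Phi\vdash\downarrow M$; (mc) from $\dagger\Xi,\dagger\Psi\vdash M$ infer $\#\Theta,\uparrow\Xi,\dagger\Psi\vdash\uparrow M$; (mc) coinductive, others inductive (every infinite branch of a derivation contains infinitely many (mc)). Basic reduction: $(\lambda x.M)N\mapsto M[N/x]$, $(\lambda^\downarrow x.M)(\downarrow N)\mapsto M[N/x]$, $(\lambda^\uparrow x.M)(\uparrow N)\mapsto M[N/x]$. $M\to N$ iff $M=C[L]$, $N=C[P]$, $L\mapsto P$ for a one-hole context $C$; $M\to_0 N$ is the special case in which the hole of $C$ lies inside no coinductive box $\uparrow(\cdot)$. Infinitary reduction $\Rightarrow$ and $\leadsto$ are given by the mixed formal system: (coinductive rule) if $M\to^*N$ and $N\leadsto L$ then $M\Rightarrow L$; (inductive rules) $x\leadsto x$; if $M\leadsto N$ and $L\leadsto P$ then $ML\leadsto NP$; if $M\leadsto N$ then $\lambda x.M\leadsto\lambda x.N$, $\lambda^\downarrow x.M\leadsto\lambda^\downarrow x.N$, $\lambda^\uparrow x.M\leadsto\lambda^\uparrow x.N$ and $\downarrow M\leadsto\downarrow N$; if $M\Rightarrow N$ then $\uparrow M\leadsto\uparrow N$. A judgment holds iff it is the root of a possibly infinite derivation tree in which every infinite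 branch uses the coinductive rule infinitely often. *)

theory Defs
  imports Main "HOL-Library.BNF_Corec"
begin

codatatype trm =
    Var nat            (* variable (de Bruijn index) *)
  | App trm trm
  | Lam trm
  | LamI trm           (* \<lambda>\<^sup>\<down>x. M *)
  | LamC trm           (* \<lambda>\<^sup>\<up>x. M *)
  | BoxI trm           (* \<down>M, inductive box *)
  | BoxC trm           (* \<up>M, coinductive box *)

primcorec lift :: "nat \<Rightarrow> trm \<Rightarrow> trm" where
  "lift k M = (case M of
      Var i \<Rightarrow> Var (if i < k then i else Suc i)
    | App A B \<Rightarrow> App (lift k A) (lift k B)
    | Lam A \<Rightarrow> Lam (lift (Suc k) A)
    | LamI A \<Rightarrow> LamI (lift (Suc k) A)
    | LamC A \<Rightarrow> LamC (lift (Suc k) A)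
    | BoxI A \<Rightarrow> BoxI (lift k A)
    | BoxC A \<Rightarrow> BoxC (lift k A))"

text \<open>Capture-avoiding substitution \<open>M[N/k]\<close> (indices above \<open>k\<close> are decremented,
  as the binder for \<open>k\<close> disappears).\<close>
corec subst :: "nat \<Rightarrow> trm \<Rightarrow> trm \<Rightarrow> trm" where
  "subst k N M = (case M of
      Var i \<Rightarrow> (if i = k then N else if k < i then Var (i - 1) else Var i)
    | App A B \<Rightarrow> App (subst k N A) (subst k N B)
    | Lam A \<Rightarrow> Lam (subst (Suc k) (lift 0 N) A)
    | LamI A \<Rightarrow> LamI (subst (Suc k) (lift 0 N) A)
    | LamC A \<Rightarrow> LamC (subst (Suc k) (lift 0 N) A)
    | BoxI A \<Rightarrow> BoxI (subst k N A)
    | BoxC A \<Rightarrow> BoxC (subst k N A))"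

text \<open>Patterns \<open>x, \<down>x, \<up>x, #x, \<dagger>x\<close>.\<close>
datatype pat = PLin | PDown | PUp | PHash | PDag

type_synonym env = "nat \<Rightarrow> pat option"

definition env_ok :: "env \<Rightarrow> bool" where
  "env_ok \<Gamma> \<longleftrightarrow> finite {i. \<Gamma> i \<noteq> None}"

definition ext :: "pat \<Rightarrow> env \<Rightarrow> env" where
  "ext p \<Gamma> = case_nat (Some p) \<Gamma>"

text \<open>\<open>\<Gamma> = #\<Theta>,\<up>\<Xi>,\<dagger>\<Psi>,p x\<close>\<close>
definition var_env :: "pat \<Rightarrow> nat \<Rightarrow> env \<Rightarrow> bool" where
  "var_env p x \<Gamma> \<longleftrightarrow> \<Gamma> x = Some p \<and>
     (\<forall>y. y \<noteq> x \<longrightarrow> \<Gamma> y \<in> {None, Some PHash, Some PUp, Some PDag})"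

text \<open>\<open>\<Gamma> = \<Upsilon>,\<Pi>,#\<Theta>,\<up>\<Xi>,\<dagger>\<Psi>\<close>, \<open>\<Gamma>1 = \<Upsilon>,#\<Theta>,\<up>\<Xi>,\<dagger>\<Psi>\<close>, \<open>\<Gamma>2 = \<Pi>,#\<Theta>,\<up>\<Xi>,\<dagger>\<Psi>\<close>.\<close>
definition app_split :: "env \<Rightarrow> env \<Rightarrow> env \<Rightarrow> bool" where
  "app_split \<Gamma> \<Gamma>1 \<Gamma>2 \<longleftrightarrow> (\<forall>y.
     (\<Gamma> y \<in> {Some PLin, Some PDown} \<longrightarrow>
        (\<Gamma>1 y = \<Gamma> y \<and> \<Gamma>2 y = None) \<or> (\<Gamma>1 y = None \<and> \<Gamma>2 y = \<Gamma> y)) \<and>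
     (\<Gamma> y \<notin> {Some PLin, Some PDown} \<longrightarrow> \<Gamma>1 y = \<Gamma> y \<and> \<Gamma>2 y = \<Gamma> y))"

text \<open>(mi): conclusion \<open>\<Gamma> = #\<Theta>,\<down>\<Xi>,\<up>\<Psi>,\<dagger>\<Phi>\<close>, premise \<open>\<Delta> = \<Xi>,\<up>\<Psi>,\<dagger>\<Phi>\<close>.\<close>
definition boxi_env :: "env \<Rightarrow> env \<Rightarrow> bool" where
  "boxi_env \<Gamma> \<Delta> \<longleftrightarrow> (\<forall>y. \<Gamma> y \<noteq> Some PLin \<and>
     \<Delta> y = (case \<Gamma> y of None \<Rightarrow> None | Some PHash \<Rightarrow> None
              | Some PDown \<Rightarrow> Some PLin | Some PUp \<Rightarrow> Some PUp
              | Some PDag \<Rightarrow> Some PDag | Some PLin \<Rightarrow> None))"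

text \<open>(mc): conclusion \<open>\<Gamma> = #\<Theta>,\<up>\<Xi>,\<dagger>\<Psi>\<close>, premise \<open>\<Delta> = \<dagger>\<Xi>,\<dagger>\<Psi>\<close>.\<close>
definition boxc_env :: "env \<Rightarrow> env \<Rightarrow> bool" where
  "boxc_env \<Gamma> \<Delta> \<longleftrightarrow> (\<forall>y. \<Gamma> y \<in> {None, Some PHash, Some PUp, Some PDag} \<and>
     \<Delta> y = (case \<Gamma> y of Some PUp \<Rightarrow> Some PDag | Some PDag \<Rightarrow> Some PDag | _ \<Rightarrow> None))"

text \<open>Inductive rules; the coinductive rule (mc) refers to the parameter \<open>R\<close>.\<close>
inductive ty_step :: "(env \<Rightarrow> trm \<Rightarrow> bool) \<Rightarrow> env \<Rightarrow> trm \<Rightarrow> bool" for R where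
  vl: "var_env PLin x \<Gamma> \<Longrightarrow> ty_step R \<Gamma> (Var x)"
| vd: "var_env PHash x \<Gamma> \<Longrightarrow> ty_step R \<Gamma> (Var x)"
| va: "var_env PDag x \<Gamma> \<Longrightarrow> ty_step R \<Gamma> (Var x)"
| a: "app_split \<Gamma> \<Gamma>1 \<Gamma>2 \<Longrightarrow> ty_step R \<Gamma>1 M \<Longrightarrow> ty_step R \<Gamma>2 N \<Longrightarrow> ty_step R \<Gamma> (App M N)"
| ll: "ty_step R (ext PLin \<Gamma>) M \<Longrightarrow> ty_step R \<Gamma> (Lam M)"
| li1: "ty_step R (ext PHash \<Gamma>) M \<Longrightarrow> ty_step R \<Gamma> (LamI M)"
| li2: "ty_step R (ext PDown \<Gamma>) M \<Longrightarrow> ty_step R \<Gamma> (LamI M)"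
| lc: "ty_step R (ext PUp \<Gamma>) M \<Longrightarrow> ty_step R \<Gamma> (LamC M)"
| mi: "boxi_env \<Gamma> \<Delta> \<Longrightarrow> ty_step R \<Delta> M \<Longrightarrow> ty_step R \<Gamma> (BoxI M)"
| mc: "boxc_env \<Gamma> \<Delta> \<Longrightarrow> R \<Delta> M \<Longrightarrow> ty_step R \<Gamma> (BoxC M)"

lemma ty_step_mono[mono]: "R \<le> S \<Longrightarrow> ty_step R \<le> ty_step S"
proof (intro le_funI le_boolI)
  fix \<Gamma> M assume le: "R \<le> S" and h: "ty_step R \<Gamma> M"
  from h show "ty_step S \<Gamma> M"
    by (induction rule: ty_step.induct) (use le in \<open>auto intro: ty_step.intros\<close>)
qed

text \<open>Mixed judgment: greatest fixed point over the inductive rules.\<close>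
coinductive ty :: "env \<Rightarrow> trm \<Rightarrow> bool" where
  "ty_step ty \<Gamma> M \<Longrightarrow> ty \<Gamma> M"

definition is_term :: "trm \<Rightarrow> bool" where
  "is_term M \<longleftrightarrow> (\<exists>\<Gamma>. env_ok \<Gamma> \<and> ty \<Gamma> M)"

inductive basic_red :: "trm \<Rightarrow> trm \<Rightarrow> bool" where
  "basic_red (App (Lam M) N) (subst 0 N M)"
| "basic_red (App (LamI M) (BoxI N)) (subst 0 N M)"
| "basic_red (App (LamC M) (BoxC N)) (subst 0 N M)"

text \<open>\<open>step True\<close> is \<open>\<rightarrow>\<close>; \<open>step False\<close> is \<open>\<rightarrow>\<^sub>0\<close> (hole not inside any \<open>\<up>(\<cdot>)\<close>).\<close>
inductive step :: "bool \<Rightarrow> trm \<Rightarrow> trm \<Rightarrow> bool" for b where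
  root: "basic_red M N \<Longrightarrow> step b M N"
| appL: "step b M M' \<Longrightarrow> step b (App M N) (App M' N)"
| appR: "step b N N' \<Longrightarrow> step b (App M N) (App M N')"
| lam: "step b M M' \<Longrightarrow> step b (Lam M) (Lam M')"
| lamI: "step b M M' \<Longrightarrow> step b (LamI M) (LamI M')"
| lamC: "step b M M' \<Longrightarrow> step b (LamC M) (LamC M')"
| boxI: "step b M M' \<Longrightarrow> step b (BoxI M) (BoxI M')"
| boxC: "b \<Longrightarrow> step b M M' \<Longrightarrow> step b (BoxC M) (BoxC M')"

abbreviation red :: "trm \<Rightarrow> trm \<Rightarrow> bool" where "red \<equiv> step True"
abbreviation red0 :: "trm \<Rightarrow> trm \<Rightarrow> bool" where "red0 \<equiv> step False"

text \<open>Inductive rules of \<open>\<leadsto>\<close>, parametrised by the coinductive relation \<open>\<Rightarrow>\<close>.\<close>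
inductive leads_step :: "(trm \<Rightarrow> trm \<Rightarrow> bool) \<Rightarrow> trm \<Rightarrow> trm \<Rightarrow> bool" for R where
  "leads_step R (Var x) (Var x)"
| "leads_step R M N \<Longrightarrow> leads_step R L P \<Longrightarrow> leads_step R (App M L) (App N P)"
| "leads_step R M N \<Longrightarrow> leads_step R (Lam M) (Lam N)"
| "leads_step R M N \<Longrightarrow> leads_step R (LamI M) (LamI N)"
| "leads_step R M N \<Longrightarrow> leads_step R (LamC M) (LamC N)"
| "leads_step R M N \<Longrightarrow> leads_step R (BoxI M) (BoxI N)"
| "R M N \<Longrightarrow> leads_step R (BoxC M) (BoxC N)"

lemma leads_step_mono[mono]: "R \<le> S \<Longrightarrow> leads_step R \<le> leads_step S"
proof (intro le_funI le_boolI)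
  fix M N assume le: "R \<le> S" and h: "leads_step R M N"
  from h show "leads_step S M N"
    by (induction rule: leads_step.induct) (use le in \<open>auto intro: leads_step.intros\<close>)
qed

coinductive inf_red :: "trm \<Rightarrow> trm \<Rightarrow> bool" where
  "red\<^sup>*\<^sup>* M N \<Longrightarrow> leads_step inf_red N L \<Longrightarrow> inf_red M L"

abbreviation leads :: "trm \<Rightarrow> trm \<Rightarrow> bool" where "leads \<equiv> leads_step inf_red"

end

theory Submission
  imports Defs "HOL-Library.BNF_Corec"
begin

lemma lift_simps[simp]:
  "lift k (Var i) = Var (if i < k then i else Suc i)"
  "lift k (App A B) = App (lift k A) (lift k B)"
  "lift k (Lam A) = Lam (lift (Suc k) A)"
  "lift k (LamI A) = LamI (lift (Suc k) A)"
  "lift k (LamC A) = LamC (lift (Suc k) A)"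
  "lift k (BoxI A) = BoxI (lift k A)"
  "lift k (BoxC A) = BoxC (lift k A)"
  by (subst lift.code; simp)+
lemma subst_simps[simp]:
  "subst k N (Var i) = (if i = k then N else if k < i then Var (i - 1) else Var i)"
  "subst k N (App A B) = App (subst k N A) (subst k N B)"
  "subst k N (Lam A) = Lam (subst (Suc k) (lift 0 N) A)"
  "subst k N (LamI A) = LamI (subst (Suc k) (lift 0 N) A)"
  "subst k N (LamC A) = LamC (subst (Suc k) (lift 0 N) A)"
  "subst k N (BoxI A) = BoxI (subst k N A)"
  "subst k N (BoxC A) = BoxC (subst k N A)"
  by (subst subst.code; simp)+

lemma lift_lift[simp]: "i \<le> j \<Longrightarrow> lift i (lift j M) = lift (Suc j) (lift i M)"
  by (coinduction arbitrary: i j M) (case_tac M; auto)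

lemma subst_lift[simp]: "subst j X (lift j N) = N"
  by (coinduction arbitrary: j X N) (case_tac N; auto)

inductive trel :: "(trm \<Rightarrow> trm \<Rightarrow> bool) \<Rightarrow> trm \<Rightarrow> trm \<Rightarrow> bool" for R where
  "trel R x x"
| "R a c \<Longrightarrow> R b d \<Longrightarrow> trel R (App a b) (App c d)"
| "R a b \<Longrightarrow> trel R (Lam a) (Lam b)"
| "R a b \<Longrightarrow> trel R (LamI a) (LamI b)"
| "R a b \<Longrightarrow> trel R (LamC a) (LamC b)"
| "R a b \<Longrightarrow> trel R (BoxI a) (BoxI b)"
| "R a b \<Longrightarrow> trel R (BoxC a) (BoxC b)"

lemma trm_bisim:
  assumes "R x y" and step: "\<And>x y. R x y \<Longrightarrow> trel R x y"
  shows "x = y"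
  using assms(1)
proof (coinduction arbitrary: x y rule: trm.coinduct_strong)
  case (Eq_trm x y)
  from step[OF Eq_trm] show ?case
    by (cases rule: trel.cases) auto
qed

lemma lift_subst_lo: "k \<le> j \<Longrightarrow> lift k (subst j N M) = subst (Suc j) (lift k N) (lift k M)"
proof (rule trm_bisim[where R="\<lambda>x y. \<exists>k j N M. k \<le> j \<and> x = lift k (subst j N M) \<and> y = subst (Suc j) (lift k N) (lift k M)"])
  fix x y assume "\<exists>k j N M. k \<le> j \<and> x = lift k (subst j N M) \<and> y = subst (Suc j) (lift k N) (lift k M)"
  then obtain k j N M where h: "k \<le> j" "x = lift k (subst j N M)" "y = subst (Suc j) (lift k N) (lift k M)" by blast
  show "trel (\<lambda>x y. \<exists>k j N M. k \<le> j \<and> x = lift k (subst j N M) \<and> y = subst (Suc j) (lift k N) (lift k M)) x y"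
  proof (cases M)
    case (Var i) then show ?thesis using h by (auto intro: trel.intros)
  next
    case (App A B) then show ?thesis using h by (auto intro!: trel.intros)
  next
    case (Lam A) then show ?thesis using h
      by - (simp, rule trel.intros(3), rule exI[of _ "Suc k"], rule exI[of _ "Suc j"], rule conjI, simp, rule exI[of _ "lift 0 N"], rule exI[of _ A], simp)
  next
    case (LamI A) then show ?thesis using h
      by - (simp, rule trel.intros(4), rule exI[of _ "Suc k"], rule exI[of _ "Suc j"], rule conjI, simp, rule exI[of _ "lift 0 N"], rule exI[of _ A], simp)
  next
    case (LamC A) then show ?thesis using h
      by - (simp, rule trel.intros(5), rule exI[of _ "Suc k"], rule exI[of _ "Suc j"], rule conjI, simp, rule exI[of _ "lift 0 N"], rule exI[of _ A], simp)
  next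
    case (BoxI A) then show ?thesis using h by (auto intro!: trel.intros)
  next
    case (BoxC A) then show ?thesis using h by (auto intro!: trel.intros)
  qed
qed auto

lemmas lift0_subst[simp] = lift_subst_lo[of 0, simplified]

definition R_lift_subst_hi where "R_lift_subst_hi x y \<longleftrightarrow> (\<exists>k j N M. j \<le> k \<and> x = lift k (subst j N M) \<and> y = subst j (lift k N) (lift (Suc k) M))"

lemma lift_subst_hi: "j \<le> k \<Longrightarrow> lift k (subst j N M) = subst j (lift k N) (lift (Suc k) M)"
proof (rule trm_bisim[where R=R_lift_subst_hi])
  fix x y assume "R_lift_subst_hi x y"
  then obtain k j N M where h: "j \<le> k" "x = lift k (subst j N M)" "y = subst j (lift k N) (lift (Suc k) M)" unfolding R_lift_subst_hi_def by blast
  show "trel R_lift_subst_hi x y"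
  proof (cases M)
    case (Var i) then show ?thesis using h by (auto intro: trel.intros)
  next
    case (App A1 A2) then show ?thesis using h by - (simp, rule trel.intros(2), unfold R_lift_subst_hi_def, blast, blast)
  next
    case (Lam A1) then show ?thesis using h by - (simp, rule trel.intros(3), unfold R_lift_subst_hi_def, blast)
  next
    case (LamI A1) then show ?thesis using h by - (simp, rule trel.intros(4), unfold R_lift_subst_hi_def, blast)
  next
    case (LamC A1) then show ?thesis using h by - (simp, rule trel.intros(5), unfold R_lift_subst_hi_def, blast)
  next
    case (BoxI A1) then show ?thesis using h by - (simp, rule trel.intros(6), unfold R_lift_subst_hi_def, blast)
  next
    case (BoxC A1) then show ?thesis using h by - (simp, rule trel.intros(7), unfold R_lift_subst_hi_def, blast)
  qed
qed (unfold R_lift_subst_hi_def, blast)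

definition R_subst_subst where "R_subst_subst x y \<longleftrightarrow> (\<exists>k j N B A. j \<le> k \<and> x = subst k N (subst j B A) \<and> y = subst j (subst k N B) (subst (Suc k) (lift j N) A))"

lemma subst_subst: "j \<le> k \<Longrightarrow> subst k N (subst j B A) = subst j (subst k N B) (subst (Suc k) (lift j N) A)"
proof (rule trm_bisim[where R=R_subst_subst])
  fix x y assume "R_subst_subst x y"
  then obtain k j N B A where h: "j \<le> k" "x = subst k N (subst j B A)" "y = subst j (subst k N B) (subst (Suc k) (lift j N) A)" unfolding R_subst_subst_def by blast
  show "trel R_subst_subst x y"
  proof (cases A)
    case (Var i) then show ?thesis using h by (auto intro: trel.intros)
  next
    case (App A1 A2) then show ?thesis using h by - (simp, rule trel.intros(2), unfold R_subst_subst_def, blast, blast)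
  next
    case (Lam A1) then show ?thesis using h by - (simp, rule trel.intros(3), unfold R_subst_subst_def, blast)
  next
    case (LamI A1) then show ?thesis using h by - (simp, rule trel.intros(4), unfold R_subst_subst_def, blast)
  next
    case (LamC A1) then show ?thesis using h by - (simp, rule trel.intros(5), unfold R_subst_subst_def, blast)
  next
    case (BoxI A1) then show ?thesis using h by - (simp, rule trel.intros(6), unfold R_subst_subst_def, blast)
  next
    case (BoxC A1) then show ?thesis using h by - (simp, rule trel.intros(7), unfold R_subst_subst_def, blast)
  qed
qed (unfold R_subst_subst_def, blast)

lemma red_lift: "step b M M' \<Longrightarrow> step b (lift k M) (lift k M')"
proof (induction arbitrary: k rule: step.induct)
  case (root M N)
  from root show ?case
  proof cases
    case (1 A B)
    have "lift k (subst 0 B A) = subst 0 (lift k B) (lift (Suc k) A)" by (rule lift_subst_hi) simp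
    then show ?thesis using 1 by (simp add: step.root basic_red.intros)
  next
    case (2 A B)
    have "lift k (subst 0 B A) = subst 0 (lift k B) (lift (Suc k) A)" by (rule lift_subst_hi) simp
    then show ?thesis using 2 by (simp add: step.root basic_red.intros)
  next
    case (3 A B)
    have "lift k (subst 0 B A) = subst 0 (lift k B) (lift (Suc k) A)" by (rule lift_subst_hi) simp
    then show ?thesis using 3 by (simp add: step.root basic_red.intros)
  qed
qed (auto intro: step.intros)

lemma red_subst: "step b M M' \<Longrightarrow> step b (subst k N M) (subst k N M')"
proof (induction arbitrary: k N rule: step.induct)
  case (root M N')
  from root show ?case
  proof cases
    case (1 A B)
    have "subst k N (subst 0 B A) = subst 0 (subst k N B) (subst (Suc k) (lift 0 N) A)" by (rule subst_subst) simp
    then show ?thesis using 1 by (simp add: step.root basic_red.intros)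
  next
    case (2 A B)
    have "subst k N (subst 0 B A) = subst 0 (subst k N B) (subst (Suc k) (lift 0 N) A)" by (rule subst_subst) simp
    then show ?thesis using 2 by (simp add: step.root basic_red.intros)
  next
    case (3 A B)
    have "subst k N (subst 0 B A) = subst 0 (subst k N B) (subst (Suc k) (lift 0 N) A)" by (rule subst_subst) simp
    then show ?thesis using 3 by (simp add: step.root basic_red.intros)
  qed
qed (auto intro: step.intros)

lemma reds_lift: "(step b)\<^sup>*\<^sup>* M M' \<Longrightarrow> (step b)\<^sup>*\<^sup>* (lift k M) (lift k M')"
  by (induction rule: rtranclp_induct) (simp, rule rtranclp.rtrancl_into_rtrancl, assumption, erule red_lift)

lemma reds_subst: "(step b)\<^sup>*\<^sup>* M M' \<Longrightarrow> (step b)\<^sup>*\<^sup>* (subst k N M) (subst k N M')"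
  by (induction rule: rtranclp_induct) (simp, rule rtranclp.rtrancl_into_rtrancl, assumption, erule red_subst)

lemma leads_step_mono':
  "leads_step R x y \<Longrightarrow> (\<And>a b. R a b \<Longrightarrow> Q a b) \<Longrightarrow> leads_step Q x y"
  by (induction rule: leads_step.induct) (auto intro: leads_step.intros)

lemma leads_step_lift:
  assumes "leads_step R N L" and "\<And>k M L. R M L \<Longrightarrow> Q (lift k M) (lift k L)"
  shows "leads_step Q (lift k N) (lift k L)"
  using assms(1) by (induction arbitrary: k rule: leads_step.induct) (simp_all add: leads_step.intros assms(2))

lemma inf_red_lift: "inf_red M L \<Longrightarrow> inf_red (lift k M) (lift k L)"
proof (coinduction arbitrary: k M L rule: inf_red.coinduct)
  case (inf_red k M L)
  then obtain N where 1: "red\<^sup>*\<^sup>* M N" "leads N L" by (cases rule: inf_red.cases) auto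
  have "leads_step (\<lambda>x y. (\<exists>k M L. x = lift k M \<and> y = lift k L \<and> inf_red M L) \<or> inf_red x y) (lift k N) (lift k L)"
    by (rule leads_step_lift[OF 1(2)]) blast
  then show ?case using reds_lift[OF 1(1)] by blast
qed

lemma leads_lift: "leads M L \<Longrightarrow> leads (lift k M) (lift k L)"
  by (erule leads_step_lift) (rule inf_red_lift)

lemma leads_step_subst:
  assumes "leads_step R A' A" and "leads B' B"
    and "\<And>k B' B A' A. leads B' B \<Longrightarrow> R A' A \<Longrightarrow> Q (subst k B' A') (subst k B A)"
    and "\<And>x y. inf_red x y \<Longrightarrow> Q x y"
  shows "leads_step Q (subst k B' A') (subst k B A)"
  using assms(1,2)
proof (induction arbitrary: k B' B rule: leads_step.induct)
  case (1 x)
  then show ?case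
    by (auto intro: leads_step.intros leads_step_mono' assms(4))
next
  case (2 M N L P)
  then show ?case by (simp add: leads_step.intros)
next
  case (3 M N)
  then show ?case by (simp add: leads_step.intros leads_lift)
next
  case (4 M N)
  then show ?case by (simp add: leads_step.intros leads_lift)
next
  case (5 M N)
  then show ?case by (simp add: leads_step.intros leads_lift)
next
  case (6 M N)
  then show ?case by (simp add: leads_step.intros)
next
  case (7 M N)
  then show ?case by (simp add: leads_step.intros assms(3))
qed

lemma leads_inf_red: "leads M N \<Longrightarrow> inf_red M N"
  by (rule inf_red.intros[OF rtranclp.rtrancl_refl])

lemma reds_ctx:
  assumes "(step b)\<^sup>*\<^sup>* M M'"
  shows "(step b)\<^sup>*\<^sup>* (App M N) (App M' N)" "(step b)\<^sup>*\<^sup>* (App N M) (App N M')"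
    "(step b)\<^sup>*\<^sup>* (Lam M) (Lam M')" "(step b)\<^sup>*\<^sup>* (LamI M) (LamI M')"
    "(step b)\<^sup>*\<^sup>* (LamC M) (LamC M')" "(step b)\<^sup>*\<^sup>* (BoxI M) (BoxI M')"
  using assms by (induction rule: rtranclp_induct)
    (simp_all, (rule rtranclp.rtrancl_into_rtrancl, assumption, erule step.intros)+)

lemma reds_app: "(step b)\<^sup>*\<^sup>* M M' \<Longrightarrow> (step b)\<^sup>*\<^sup>* N N' \<Longrightarrow> (step b)\<^sup>*\<^sup>* (App M N) (App M' N')"
  by (meson reds_ctx(1,2) rtranclp_trans)

lemma leads_step_subst_gen:
  assumes "leads_step R A A'" and "inf_red N N'"
    and "\<And>k N N' A A'. inf_red N N' \<Longrightarrow> R A A' \<Longrightarrow> Q (subst k N A) (subst k N' A')"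
    and "\<And>x y. inf_red x y \<Longrightarrow> Q x y"
  shows "\<exists>T. red\<^sup>*\<^sup>* (subst k N A) T \<and> leads_step Q T (subst k N' A')"
  using assms(1,2)
proof (induction arbitrary: k N N' rule: leads_step.induct)
  case (1 x)
  show ?case
  proof (cases "x = k")
    case True
    from 1 obtain N1 where "red\<^sup>*\<^sup>* N N1" "leads N1 N'" by (cases rule: inf_red.cases) auto
    then show ?thesis using True
      by (auto intro: leads_step_mono' assms(4))
  qed (auto intro: leads_step.intros)
next
  case (2 A1 A2 B1 B2)
  obtain T1 where 1: "red\<^sup>*\<^sup>* (subst k N A1) T1" "leads_step Q T1 (subst k N' A2)" using 2 by blast
  obtain T2 where 2: "red\<^sup>*\<^sup>* (subst k N B1) T2" "leads_step Q T2 (subst k N' B2)" using 2 by blast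
  have "red\<^sup>*\<^sup>* (subst k N (App A1 B1)) (App T1 T2)" using reds_app[OF 1(1) 2(1)] by simp
  moreover have "leads_step Q (App T1 T2) (subst k N' (App A2 B2))" using leads_step.intros(2)[OF 1(2) 2(2)] by simp
  ultimately show ?case by blast
next
  case (3 A1 A2)
  have "inf_red (lift 0 N) (lift 0 N')" using 3 by (simp add: inf_red_lift)
  then obtain T where "red\<^sup>*\<^sup>* (subst (Suc k) (lift 0 N) A1) T" "leads_step Q T (subst (Suc k) (lift 0 N') A2)"
    using 3 by blast
  then have "red\<^sup>*\<^sup>* (subst k N (Lam A1)) (Lam T)" "leads_step Q (Lam T) (subst k N' (Lam A2))"
    by (simp_all add: reds_ctx(3) leads_step.intros(3))
  then show ?case by blast
next
  case (4 A1 A2)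
  have "inf_red (lift 0 N) (lift 0 N')" using 4 by (simp add: inf_red_lift)
  then obtain T where "red\<^sup>*\<^sup>* (subst (Suc k) (lift 0 N) A1) T" "leads_step Q T (subst (Suc k) (lift 0 N') A2)"
    using 4 by blast
  then have "red\<^sup>*\<^sup>* (subst k N (LamI A1)) (LamI T)" "leads_step Q (LamI T) (subst k N' (LamI A2))"
    by (simp_all add: reds_ctx(4) leads_step.intros(4))
  then show ?case by blast
next
  case (5 A1 A2)
  have "inf_red (lift 0 N) (lift 0 N')" using 5 by (simp add: inf_red_lift)
  then obtain T where "red\<^sup>*\<^sup>* (subst (Suc k) (lift 0 N) A1) T" "leads_step Q T (subst (Suc k) (lift 0 N') A2)"
    using 5 by blast
  then have "red\<^sup>*\<^sup>* (subst k N (LamC A1)) (LamC T)" "leads_step Q (LamC T) (subst k N' (LamC A2))"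
    by (simp_all add: reds_ctx(5) leads_step.intros(5))
  then show ?case by blast
next
  case (6 A1 A2)
  then obtain T where "red\<^sup>*\<^sup>* (subst k N A1) T" "leads_step Q T (subst k N' A2)" by blast
  then have "red\<^sup>*\<^sup>* (subst k N (BoxI A1)) (BoxI T)" "leads_step Q (BoxI T) (subst k N' (BoxI A2))"
    by (simp_all add: reds_ctx(6) leads_step.intros(6))
  then show ?case by blast
next
  case (7 A1 A2)
  then have "leads_step Q (BoxC (subst k N A1)) (subst k N' (BoxC A2))"
    by (simp add: leads_step.intros(7) assms(3))
  then show ?case by (intro exI[of _ "BoxC (subst k N A1)"]) simp
qed

lemma inf_red_subst: "inf_red A A' \<Longrightarrow> inf_red N N' \<Longrightarrow> inf_red (subst k N A) (subst k N' A')"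
proof (coinduction arbitrary: k N N' A A' rule: inf_red.coinduct)
  case (inf_red k N N' A A')
  let ?Q = "\<lambda>x y. (\<exists>k N N' A A'. x = subst k N A \<and> y = subst k N' A' \<and> inf_red A A' \<and> inf_red N N') \<or> inf_red x y"
  from inf_red(1) obtain A1 where a: "red\<^sup>*\<^sup>* A A1" "leads A1 A'" by (cases rule: inf_red.cases) auto
  have "\<exists>T. red\<^sup>*\<^sup>* (subst k N A1) T \<and> leads_step ?Q T (subst k N' A')"
  proof (rule leads_step_subst_gen[OF a(2) inf_red(2)])
    fix k N N' A A' assume "inf_red N N'" "inf_red A A'"
    then show "?Q (subst k N A) (subst k N' A')" by blast
  next
    fix x y assume "inf_red x y" then show "?Q x y" by blast
  qed
  then obtain T where T: "red\<^sup>*\<^sup>* (subst k N A1) T" "leads_step ?Q T (subst k N' A')" by blast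
  have "red\<^sup>*\<^sup>* (subst k N A) T" using reds_subst[OF a(1)] T(1) by (rule rtranclp_trans)
  with T(2) show ?case by blast
qed

lemma leads_subst: "leads A' A \<Longrightarrow> leads B' B \<Longrightarrow> leads (subst k B' A') (subst k B A)"
  by (erule leads_step_subst) (simp_all add: inf_red_subst leads_inf_red)

inductive guard :: "nat \<Rightarrow> trm \<Rightarrow> bool" where
  "j \<noteq> k \<Longrightarrow> guard k (Var j)"
| "guard k A \<Longrightarrow> guard k B \<Longrightarrow> guard k (App A B)"
| "guard (Suc k) A \<Longrightarrow> guard k (Lam A)"
| "guard (Suc k) A \<Longrightarrow> guard k (LamI A)"
| "guard (Suc k) A \<Longrightarrow> guard k (LamC A)"
| "guard k A \<Longrightarrow> guard k (BoxI A)"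
| "guard k (BoxC A)"

inductive_cases lsVar: "leads_step R (Var x) y"
inductive_cases lsApp: "leads_step R (App a b) y"
inductive_cases lsLam: "leads_step R (Lam a) y"
inductive_cases lsLamI: "leads_step R (LamI a) y"
inductive_cases lsLamC: "leads_step R (LamC a) y"
inductive_cases lsBoxI: "leads_step R (BoxI a) y"
inductive_cases lsBoxC: "leads_step R (BoxC a) y"

lemma leads_subst_guard: "guard k A' \<Longrightarrow> leads A' A \<Longrightarrow> inf_red B' B \<Longrightarrow> leads (subst k B' A') (subst k B A)"
proof (induction arbitrary: A B' B rule: guard.induct)
  case (1 j k)
  then show ?case by (auto elim!: lsVar intro: leads_step.intros)
next
  case (2 k A1 A2)
  from "2.prems"(1) obtain C1 C2 where "A = App C1 C2" "leads A1 C1" "leads A2 C2" by (elim lsApp) blast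
  with 2 show ?case by (simp add: leads_step.intros(2))
next
  case (3 k A1)
  from "3.prems"(1) obtain C1 where "A = Lam C1" "leads A1 C1" by (elim lsLam) blast
  with 3 show ?case by (simp add: leads_step.intros(3) inf_red_lift)
next
  case (4 k A1)
  from "4.prems"(1) obtain C1 where "A = LamI C1" "leads A1 C1" by (elim lsLamI) blast
  with 4 show ?case by (simp add: leads_step.intros(4) inf_red_lift)
next
  case (5 k A1)
  from "5.prems"(1) obtain C1 where "A = LamC C1" "leads A1 C1" by (elim lsLamC) blast
  with 5 show ?case by (simp add: leads_step.intros(5) inf_red_lift)
next
  case (6 k A1)
  from "6.prems"(1) obtain C1 where "A = BoxI C1" "leads A1 C1" by (elim lsBoxI) blast
  with 6 show ?case by (simp add: leads_step.intros(6))
next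
  case (7 k A1)
  from "7.prems"(1) obtain C1 where "A = BoxC C1" "inf_red A1 C1" by (elim lsBoxC) blast
  with 7 show ?case by (simp add: leads_step.intros(7) inf_red_subst)
qed


lemma ext_Suc[simp]: "ext p \<Gamma> (Suc k) = \<Gamma> k" and ext_0[simp]: "ext p \<Gamma> 0 = Some p"
  by (simp_all add: ext_def)

lemma app_split_nl: "app_split \<Gamma> \<Gamma>1 \<Gamma>2 \<Longrightarrow> \<Gamma> k \<notin> {Some PLin, Some PDown} \<Longrightarrow> \<Gamma>1 k = \<Gamma> k \<and> \<Gamma>2 k = \<Gamma> k"
  unfolding app_split_def by blast

lemma ty_guard: "ty_step R \<Gamma> A \<Longrightarrow> \<Gamma> k \<in> {None, Some PUp} \<Longrightarrow> guard k A"
proof (induction arbitrary: k rule: ty_step.induct)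
  case (vl x \<Gamma>) then show ?case by (auto simp: var_env_def intro!: guard.intros(1))
next
  case (vd x \<Gamma>) then show ?case by (auto simp: var_env_def intro!: guard.intros(1))
next
  case (va x \<Gamma>) then show ?case by (auto simp: var_env_def intro!: guard.intros(1))
next
  case (a \<Gamma> \<Gamma>1 \<Gamma>2 M N)
  have "\<Gamma>1 k = \<Gamma> k" "\<Gamma>2 k = \<Gamma> k" using app_split_nl[OF a(1), of k] a(6) by auto
  then show ?case using a by (simp add: guard.intros(2))
next
  case (ll \<Gamma> M) then show ?case by (simp add: guard.intros(3))
next
  case (li1 \<Gamma> M) then show ?case by (simp add: guard.intros(4))
next
  case (li2 \<Gamma> M) then show ?case by (simp add: guard.intros(4))
next
  case (lc \<Gamma> M) then show ?case by (simp add: guard.intros(5))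
next
  case (mi \<Gamma> \<Delta> M)
  have "\<Delta> k = (case \<Gamma> k of None \<Rightarrow> None | Some PHash \<Rightarrow> None
              | Some PDown \<Rightarrow> Some PLin | Some PUp \<Rightarrow> Some PUp
              | Some PDag \<Rightarrow> Some PDag | Some PLin \<Rightarrow> None)" using mi(1) unfolding boxi_env_def by blast
  then have "\<Delta> k \<in> {None, Some PUp}" using mi(4) by auto
  then show ?case using mi by (simp add: guard.intros(6))
next
  case (mc \<Gamma> \<Delta> M) then show ?case by (simp add: guard.intros(7))
qed

lemma ty_unfold: "ty \<Gamma> M \<Longrightarrow> ty_step ty \<Gamma> M"
  by (erule ty.cases) auto

inductive_cases tsApp: "ty_step R \<Gamma> (App a b)"
inductive_cases tsLam: "ty_step R \<Gamma> (Lam a)"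
inductive_cases tsLamI: "ty_step R \<Gamma> (LamI a)"
inductive_cases tsLamC: "ty_step R \<Gamma> (LamC a)"
inductive_cases tsBoxI: "ty_step R \<Gamma> (BoxI a)"
inductive_cases tsBoxC: "ty_step R \<Gamma> (BoxC a)"

inductive_cases rsApp: "leads_step R x (App a b)"
inductive_cases rsLam: "leads_step R x (Lam a)"
inductive_cases rsLamI: "leads_step R x (LamI a)"
inductive_cases rsLamC: "leads_step R x (LamC a)"
inductive_cases rsBoxI: "leads_step R x (BoxI a)"
inductive_cases rsBoxC: "leads_step R x (BoxC a)"

lemma commute: "red0 N L \<Longrightarrow> leads M N \<Longrightarrow> ty_step ty \<Gamma> M \<Longrightarrow> \<exists>P. red0 M P \<and> leads P L"
proof (induction arbitrary: M \<Gamma> rule: step.induct)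
  case (root N L)
  from root(1) show ?case
  proof cases
    case (1 A B)
    from root(2) obtain A' B' where "M = App (Lam A') B'" "leads A' A" "leads B' B"
      unfolding 1 by (elim rsApp rsLam) blast
    then have "red0 M (subst 0 B' A')" "leads (subst 0 B' A') L"
      by (simp_all add: 1 step.root basic_red.intros leads_subst)
    then show ?thesis by blast
  next
    case (2 A B)
    from root(2) obtain A' B' where "M = App (LamI A') (BoxI B')" "leads A' A" "leads B' B"
      unfolding 2 by (elim rsApp rsLamI rsBoxI) blast
    then have "red0 M (subst 0 B' A')" "leads (subst 0 B' A') L"
      by (simp_all add: 2 step.root basic_red.intros leads_subst)
    then show ?thesis by blast
  next
    case (3 A B)
    from root(2) obtain A' B' where M: "M = App (LamC A') (BoxC B')" "leads A' A" "inf_red B' B"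
      unfolding 3 by (elim rsApp rsLamC rsBoxC) blast
    from root(3) obtain \<Gamma>' where "ty_step ty (ext PUp \<Gamma>') A'"
      unfolding M(1) by (elim tsApp tsLamC) blast
    then have "guard 0 A'" by (rule ty_guard) simp
    then have "red0 M (subst 0 B' A')" "leads (subst 0 B' A') L"
      using M by (simp_all add: 3 step.root basic_red.intros leads_subst_guard)
    then show ?thesis by blast
  qed
next
  case (appL N N' L)
  from appL(3) obtain M1 M2 where M: "M = App M1 M2" "leads M1 N" "leads M2 L" by (elim rsApp) blast
  from appL(4) obtain G where "ty_step ty G M1" unfolding M(1) by (elim tsApp) blast
  with appL(2)[OF M(2)] obtain P where "red0 M1 P" "leads P N'" by blast
  with M show ?case by (blast intro: step.intros leads_step.intros)
next
  case (appR N N' L)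
  from appR(3) obtain M1 M2 where M: "M = App M1 M2" "leads M1 L" "leads M2 N" by (elim rsApp) blast
  from appR(4) obtain G where "ty_step ty G M2" unfolding M(1) by (elim tsApp) blast
  with appR(2)[OF M(3)] obtain P where "red0 M2 P" "leads P N'" by blast
  with M show ?case by (blast intro: step.intros leads_step.intros)
next
  case (lam N N')
  from lam(3) obtain M1 where M: "M = Lam M1" "leads M1 N" by (elim rsLam) blast
  from lam(4) obtain G where "ty_step ty G M1" unfolding M(1) by (elim tsLam) blast
  with lam(2)[OF M(2)] obtain P where "red0 M1 P" "leads P N'" by blast
  with M show ?case by (blast intro: step.intros leads_step.intros)
next
  case (lamI N N')
  from lamI(3) obtain M1 where M: "M = LamI M1" "leads M1 N" by (elim rsLamI) blast
  from lamI(4) obtain G where "ty_step ty G M1" unfolding M(1) by (elim tsLamI) blast+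
  with lamI(2)[OF M(2)] obtain P where "red0 M1 P" "leads P N'" by blast
  with M show ?case by (blast intro: step.intros leads_step.intros)
next
  case (lamC N N')
  from lamC(3) obtain M1 where M: "M = LamC M1" "leads M1 N" by (elim rsLamC) blast
  from lamC(4) obtain G where "ty_step ty G M1" unfolding M(1) by (elim tsLamC) blast
  with lamC(2)[OF M(2)] obtain P where "red0 M1 P" "leads P N'" by blast
  with M show ?case by (blast intro: step.intros leads_step.intros)
next
  case (boxI N N')
  from boxI(3) obtain M1 where M: "M = BoxI M1" "leads M1 N" by (elim rsBoxI) blast
  from boxI(4) obtain G where "ty_step ty G M1" unfolding M(1) by (elim tsBoxI) blast
  with boxI(2)[OF M(2)] obtain P where "red0 M1 P" "leads P N'" by blast
  with M show ?case by (blast intro: step.intros leads_step.intros)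
next
  case (boxC N N')
  then show ?case by simp
qed



lemma popt_cases[case_names None Lin Down Up Hash Dag]:
  obtains "x = None" | "x = Some PLin" | "x = Some PDown" | "x = Some PUp" | "x = Some PHash" | "x = Some PDag"
proof (cases x)
  case (Some a) then show ?thesis using that by (cases a) auto
qed (use that in auto)

definition nonlin :: "pat option set" where "nonlin = {Some PHash, Some PUp, Some PDag}"

definition wk :: "env \<Rightarrow> env \<Rightarrow> bool" where
  "wk E G \<longleftrightarrow> (\<forall>y. G y = E y \<or> (E y = None \<and> G y \<in> nonlin) \<or> (E y = Some PLin \<and> G y = Some PHash))"

definition boxi_f :: "env \<Rightarrow> env" where
  "boxi_f G y = (case G y of Some PDown \<Rightarrow> Some PLin | Some PUp \<Rightarrow> Some PUp | Some PDag \<Rightarrow> Some PDag | _ \<Rightarrow> None)"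
definition boxc_f :: "env \<Rightarrow> env" where
  "boxc_f G y = (case G y of Some PUp \<Rightarrow> Some PDag | Some PDag \<Rightarrow> Some PDag | _ \<Rightarrow> None)"

lemma boxi_envD: "boxi_env G D \<Longrightarrow> G y \<noteq> Some PLin \<and> D y = boxi_f G y"
  unfolding boxi_env_def boxi_f_def by (erule allE[of _ y]) (cases "G y" rule: popt_cases; simp)

lemma boxi_envI: "(\<And>y. G y \<noteq> Some PLin) \<Longrightarrow> boxi_env G (boxi_f G)"
  unfolding boxi_env_def boxi_f_def by (auto split: option.splits pat.splits)

lemma boxc_envD: "boxc_env G D \<Longrightarrow> G y \<in> {None, Some PHash, Some PUp, Some PDag} \<and> D y = boxc_f G y"
  unfolding boxc_env_def boxc_f_def by (erule allE[of _ y]) (cases "G y" rule: popt_cases; simp)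

lemma boxc_envI: "(\<And>y. G y \<in> {None, Some PHash, Some PUp, Some PDag}) \<Longrightarrow> boxc_env G (boxc_f G)"
  unfolding boxc_env_def boxc_f_def by (auto split: option.splits pat.splits)

lemma app_splitD: "app_split \<Gamma> \<Gamma>1 \<Gamma>2 \<Longrightarrow>
     (\<Gamma> y \<in> {Some PLin, Some PDown} \<longrightarrow>
        (\<Gamma>1 y = \<Gamma> y \<and> \<Gamma>2 y = None) \<or> (\<Gamma>1 y = None \<and> \<Gamma>2 y = \<Gamma> y)) \<and>
     (\<Gamma> y \<notin> {Some PLin, Some PDown} \<longrightarrow> \<Gamma>1 y = \<Gamma> y \<and> \<Gamma>2 y = \<Gamma> y)"
  unfolding app_split_def by blast

lemma wkD: "wk E G \<Longrightarrow> G y = E y \<or> (E y = None \<and> G y \<in> nonlin) \<or> (E y = Some PLin \<and> G y = Some PHash)"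
  unfolding wk_def by blast

lemma var_envD: "var_env p x \<Gamma> \<Longrightarrow> \<Gamma> x = Some p \<and> (y \<noteq> x \<longrightarrow> \<Gamma> y \<in> {None, Some PHash, Some PUp, Some PDag})"
  unfolding var_env_def by blast

lemma wk_step:
  assumes "ty_step R E N" "wk E G" "\<And>D D' M. R D M \<Longrightarrow> wk D D' \<Longrightarrow> Q D' M"
  shows "ty_step Q G N"
  using assms(1,2)
proof (induction arbitrary: G rule: ty_step.induct)
  case (vl x \<Gamma>)
  have o: "\<forall>y. y \<noteq> x \<longrightarrow> G y \<in> {None, Some PHash, Some PUp, Some PDag}"
  proof (intro allI impI)
    fix y assume "y \<noteq> x"
    with var_envD[OF vl(1), of y] wkD[OF vl(2), of y] show "G y \<in> {None, Some PHash, Some PUp, Some PDag}"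
      by (cases "\<Gamma> y" rule: popt_cases; cases "G y" rule: popt_cases) (auto simp: nonlin_def)
  qed
  have "G x = Some PLin \<or> G x = Some PHash"
    using var_envD[OF vl(1), of x] wkD[OF vl(2), of x] by (auto simp: nonlin_def)
  then show ?case
  proof
    assume "G x = Some PLin" then show ?case using o by (simp add: var_env_def ty_step.vl)
  next
    assume "G x = Some PHash" then show ?case using o by (simp add: var_env_def ty_step.vd)
  qed
next
  case (vd x \<Gamma>)
  have o: "\<forall>y. y \<noteq> x \<longrightarrow> G y \<in> {None, Some PHash, Some PUp, Some PDag}"
  proof (intro allI impI)
    fix y assume "y \<noteq> x"
    with var_envD[OF vd(1), of y] wkD[OF vd(2), of y] show "G y \<in> {None, Some PHash, Some PUp, Some PDag}"
      by (cases "\<Gamma> y" rule: popt_cases; cases "G y" rule: popt_cases) (auto simp: nonlin_def)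
  qed
  have "G x = Some PHash"
    using var_envD[OF vd(1), of x] wkD[OF vd(2), of x] by (auto simp: nonlin_def)
  then show ?case using o by (simp add: var_env_def ty_step.vd)
next
  case (va x \<Gamma>)
  have o: "\<forall>y. y \<noteq> x \<longrightarrow> G y \<in> {None, Some PHash, Some PUp, Some PDag}"
  proof (intro allI impI)
    fix y assume "y \<noteq> x"
    with var_envD[OF va(1), of y] wkD[OF va(2), of y] show "G y \<in> {None, Some PHash, Some PUp, Some PDag}"
      by (cases "\<Gamma> y" rule: popt_cases; cases "G y" rule: popt_cases) (auto simp: nonlin_def)
  qed
  have "G x = Some PDag"
    using var_envD[OF va(1), of x] wkD[OF va(2), of x] by (auto simp: nonlin_def)
  then show ?case using o by (simp add: var_env_def ty_step.va)
next
  case (a \<Gamma> \<Gamma>1 \<Gamma>2 M N)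
  define G1 where "G1 y = (if G y \<in> {Some PLin, Some PDown} then (if \<Gamma>1 y = None then None else G y) else G y)" for y
  define G2 where "G2 y = (if G y \<in> {Some PLin, Some PDown} then (if \<Gamma>2 y = None then None else G y) else G y)" for y
  have as: "app_split G G1 G2"
    unfolding app_split_def
  proof
    fix y show "(G y \<in> {Some PLin, Some PDown} \<longrightarrow>
        (G1 y = G y \<and> G2 y = None) \<or> (G1 y = None \<and> G2 y = G y)) \<and>
     (G y \<notin> {Some PLin, Some PDown} \<longrightarrow> G1 y = G y \<and> G2 y = G y)"
      using app_splitD[OF a(1), of y] wkD[OF a(6), of y] unfolding G1_def G2_def
      by (cases "\<Gamma> y" rule: popt_cases; cases "G y" rule: popt_cases) (auto simp: nonlin_def)
  qed
  have w1: "wk \<Gamma>1 G1" unfolding wk_def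
  proof
    fix y show "G1 y = \<Gamma>1 y \<or> (\<Gamma>1 y = None \<and> G1 y \<in> nonlin) \<or> (\<Gamma>1 y = Some PLin \<and> G1 y = Some PHash)"
      using app_splitD[OF a(1), of y] wkD[OF a(6), of y] unfolding G1_def
      by (cases "\<Gamma> y" rule: popt_cases; cases "G y" rule: popt_cases) (auto simp: nonlin_def)
  qed
  have w2: "wk \<Gamma>2 G2" unfolding wk_def
  proof
    fix y show "G2 y = \<Gamma>2 y \<or> (\<Gamma>2 y = None \<and> G2 y \<in> nonlin) \<or> (\<Gamma>2 y = Some PLin \<and> G2 y = Some PHash)"
      using app_splitD[OF a(1), of y] wkD[OF a(6), of y] unfolding G2_def
      by (cases "\<Gamma> y" rule: popt_cases; cases "G y" rule: popt_cases) (auto simp: nonlin_def)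
  qed
  show ?case by (rule ty_step.a[OF as a.IH(1)[OF w1] a.IH(2)[OF w2]])
next
  case (ll \<Gamma> M)
  have "wk (ext PLin \<Gamma>) (ext PLin G)" using ll(3) unfolding wk_def ext_def by (auto split: nat.splits)
  then show ?case by (rule ty_step.ll[OF ll(2)])
next
  case (li1 \<Gamma> M)
  have "wk (ext PHash \<Gamma>) (ext PHash G)" using li1(3) unfolding wk_def ext_def by (auto split: nat.splits)
  then show ?case by (rule ty_step.li1[OF li1(2)])
next
  case (li2 \<Gamma> M)
  have "wk (ext PDown \<Gamma>) (ext PDown G)" using li2(3) unfolding wk_def ext_def by (auto split: nat.splits)
  then show ?case by (rule ty_step.li2[OF li2(2)])
next
  case (lc \<Gamma> M)
  have "wk (ext PUp \<Gamma>) (ext PUp G)" using lc(3) unfolding wk_def ext_def by (auto split: nat.splits)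
  then show ?case by (rule ty_step.lc[OF lc(2)])
next
  case (mi \<Gamma> \<Delta> M)
  have g: "G y \<noteq> Some PLin" for y
    using boxi_envD[OF mi(1), of y] wkD[OF mi(4), of y] by (auto simp: nonlin_def)
  have "wk \<Delta> (boxi_f G)" unfolding wk_def
  proof
    fix y show "boxi_f G y = \<Delta> y \<or> (\<Delta> y = None \<and> boxi_f G y \<in> nonlin) \<or> (\<Delta> y = Some PLin \<and> boxi_f G y = Some PHash)"
      using boxi_envD[OF mi(1), of y] wkD[OF mi(4), of y] unfolding boxi_f_def
      by (cases "\<Gamma> y" rule: popt_cases; cases "G y" rule: popt_cases) (auto simp: nonlin_def)
  qed
  then show ?case by (rule ty_step.mi[OF boxi_envI[of G, OF g] mi(3)])
next
  case (mc \<Gamma> \<Delta> M)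
  have g: "G y \<in> {None, Some PHash, Some PUp, Some PDag}" for y
    using boxc_envD[OF mc(1), of y] wkD[OF mc(3), of y] by (auto simp: nonlin_def)
  have w: "wk \<Delta> (boxc_f G)" unfolding wk_def
  proof
    fix y show "boxc_f G y = \<Delta> y \<or> (\<Delta> y = None \<and> boxc_f G y \<in> nonlin) \<or> (\<Delta> y = Some PLin \<and> boxc_f G y = Some PHash)"
      using boxc_envD[OF mc(1), of y] wkD[OF mc(3), of y] unfolding boxc_f_def
      by (cases "\<Gamma> y" rule: popt_cases; cases "G y" rule: popt_cases) (auto simp: nonlin_def)
  qed
  show ?case by (rule ty_step.mc[where R=Q, OF boxc_envI[of G, OF g] assms(3)[OF mc(2) w]])
qed

lemma ty_wk: "ty E N \<Longrightarrow> wk E G \<Longrightarrow> ty G N"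
proof (coinduction arbitrary: E G N rule: ty.coinduct)
  case (ty E G N)
  have "ty_step (\<lambda>G N. (\<exists>E. ty E N \<and> wk E G) \<or> ty G N) G N"
  proof (rule wk_step[OF ty_unfold[OF ty(1)] ty(2)])
    fix D D' M assume "ty D M" "wk D D'"
    then show "(\<exists>E. ty E M \<and> wk E D') \<or> ty D' M" by blast
  qed
  then show ?case by (intro exI[of _ G] exI[of _ N]) simp
qed


definition ins :: "nat \<Rightarrow> env \<Rightarrow> env" where
  "ins k E i = (if i < k then E i else if i = k then None else E (i - 1))"

lemma ins_pw2: "(\<forall>y. P (E y) (F y)) \<Longrightarrow> P None None \<Longrightarrow> (\<forall>y. P (ins k E y) (ins k F y))"
  unfolding ins_def by auto

lemma ins_pw3: "(\<forall>y. P (E y) (F y) (G y)) \<Longrightarrow> P None None None \<Longrightarrow> (\<forall>y. P (ins k E y) (ins k F y) (ins k G y))"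
  unfolding ins_def by auto

lemma app_split_ins: "app_split E E1 E2 \<Longrightarrow> app_split (ins k E) (ins k E1) (ins k E2)"
  unfolding app_split_def by (rule ins_pw3[where P="\<lambda>a b c. (a \<in> {Some PLin, Some PDown} \<longrightarrow>
        (b = a \<and> c = None) \<or> (b = None \<and> c = a)) \<and> (a \<notin> {Some PLin, Some PDown} \<longrightarrow> b = a \<and> c = a)"]) auto

lemma boxi_env_ins: "boxi_env E D \<Longrightarrow> boxi_env (ins k E) (ins k D)"
  unfolding boxi_env_def by (rule ins_pw2[where P="\<lambda>a b. a \<noteq> Some PLin \<and>
     b = (case a of None \<Rightarrow> None | Some PHash \<Rightarrow> None
              | Some PDown \<Rightarrow> Some PLin | Some PUp \<Rightarrow> Some PUp
              | Some PDag \<Rightarrow> Some PDag | Some PLin \<Rightarrow> None)"]) auto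

lemma boxc_env_ins: "boxc_env E D \<Longrightarrow> boxc_env (ins k E) (ins k D)"
  unfolding boxc_env_def by (rule ins_pw2[where P="\<lambda>a b. a \<in> {None, Some PHash, Some PUp, Some PDag} \<and>
     b = (case a of Some PUp \<Rightarrow> Some PDag | Some PDag \<Rightarrow> Some PDag | _ \<Rightarrow> None)"]) auto

lemma var_env_ins: "var_env p x E \<Longrightarrow> var_env p (if x < k then x else Suc x) (ins k E)"
  unfolding var_env_def ins_def by auto

lemma ext_ins: "ext p (ins k E) = ins (Suc k) (ext p E)"
  unfolding ext_def ins_def fun_eq_iff by (auto split: nat.splits)

lemma lift_step:
  assumes "ty_step R E N" "\<And>D M k. R D M \<Longrightarrow> Q (ins k D) (lift k M)"
  shows "ty_step Q (ins k E) (lift k N)"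
  using assms(1)
proof (induction arbitrary: k rule: ty_step.induct)
  case (vl x \<Gamma>) then show ?case by (simp add: ty_step.vl var_env_ins)
next
  case (vd x \<Gamma>) then show ?case by (simp add: ty_step.vd var_env_ins)
next
  case (va x \<Gamma>) then show ?case by (simp add: ty_step.va var_env_ins)
next
  case (a \<Gamma> \<Gamma>1 \<Gamma>2 M N)
  show ?case by (simp, rule ty_step.a[OF app_split_ins[OF a(1)] a.IH(1) a.IH(2)])
next
  case (ll \<Gamma> M) show ?case by (simp, rule ty_step.ll, simp add: ext_ins ll.IH)
next
  case (li1 \<Gamma> M) show ?case by (simp, rule ty_step.li1, simp add: ext_ins li1.IH)
next
  case (li2 \<Gamma> M) show ?case by (simp, rule ty_step.li2, simp add: ext_ins li2.IH)
next
  case (lc \<Gamma> M) show ?case by (simp, rule ty_step.lc, simp add: ext_ins lc.IH)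
next
  case (mi \<Gamma> \<Delta> M) show ?case by (simp, rule ty_step.mi[OF boxi_env_ins[OF mi(1)] mi.IH])
next
  case (mc \<Gamma> \<Delta> M) show ?case by (simp, rule ty_step.mc[where R=Q, OF boxc_env_ins[OF mc(1)] assms(2)[OF mc(2)]])
qed

lemma ty_lift: "ty E N \<Longrightarrow> ty (ins k E) (lift k N)"
proof (coinduction arbitrary: E N k rule: ty.coinduct)
  case (ty E N k)
  have "ty_step (\<lambda>G M. (\<exists>E N k. G = ins k E \<and> M = lift k N \<and> ty E N) \<or> ty G M) (ins k E) (lift k N)"
  proof (rule lift_step[OF ty_unfold[OF ty]])
    fix D M k assume "ty D M"
    then show "(\<exists>E N k'. ins k D = ins k' E \<and> lift k M = lift k' N \<and> ty E N) \<or> ty (ins k D) (lift k M)" by blast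
  qed
  then show ?case by (intro exI[of _ "ins k E"] exI[of _ "lift k N"]) simp
qed



definition dk :: "nat \<Rightarrow> env \<Rightarrow> env" where "dk k G y = G (if y < k then y else Suc y)"

definition LD :: "pat option set" where "LD = {Some PLin, Some PDown}"

definition comb :: "env \<Rightarrow> env \<Rightarrow> env \<Rightarrow> bool" where
  "comb G F \<Gamma> \<longleftrightarrow> (\<forall>y. (G y \<in> LD \<and> F y = None \<and> \<Gamma> y = G y) \<or> (F y \<in> LD \<and> G y = None \<and> \<Gamma> y = F y)
      \<or> (G y \<notin> LD \<and> \<Gamma> y = G y \<and> (F y = None \<or> F y = G y)))"

definition combH :: "env \<Rightarrow> env \<Rightarrow> env \<Rightarrow> bool" where
  "combH G F \<Gamma> \<longleftrightarrow> (\<forall>y. (F y = Some PDown \<and> G y = None \<and> \<Gamma> y = Some PHash)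
      \<or> (F y \<noteq> Some PDown \<and> \<Gamma> y = G y \<and> (F y = None \<or> (F y = G y \<and> G y \<notin> LD))))"

definition dcondU :: "env \<Rightarrow> env \<Rightarrow> bool" where
  "dcondU G D \<longleftrightarrow> (\<forall>y. D y = None \<or> (D y = Some PDag \<and> G y \<in> {Some PUp, Some PDag}))"

definition dcondT :: "env \<Rightarrow> env \<Rightarrow> bool" where
  "dcondT G D \<longleftrightarrow> (\<forall>y. D y = None \<or> (D y = Some PDag \<and> G y = Some PDag))"

definition scond :: "env \<Rightarrow> nat \<Rightarrow> trm \<Rightarrow> env \<Rightarrow> bool" where
  "scond GM k N \<Gamma> \<longleftrightarrow>
    (GM k = None \<and> \<Gamma> = dk k GM) \<or>
    (GM k = Some PLin \<and> (\<exists>E. ty E N \<and> comb (dk k GM) E \<Gamma>)) \<or>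
    (GM k = Some PDown \<and> (\<exists>E F. ty E N \<and> boxi_env F E \<and> comb (dk k GM) F \<Gamma>)) \<or>
    (GM k = Some PHash \<and> (\<exists>E F. ty E N \<and> boxi_env F E \<and> combH (dk k GM) F \<Gamma>)) \<or>
    (GM k = Some PUp \<and> \<Gamma> = dk k GM \<and> (\<exists>D. ty D N \<and> dcondU (dk k GM) D)) \<or>
    (GM k = Some PDag \<and> \<Gamma> = dk k GM \<and> (\<exists>D. ty D N \<and> dcondT (dk k GM) D))"

lemma dk_ext: "dk (Suc k) (ext p G) = ext p (dk k G)"
  unfolding dk_def ext_def fun_eq_iff by (auto split: nat.splits)

lemma ins0_Suc[simp]: "ins 0 E (Suc y) = E y" and ins0_0[simp]: "ins 0 E 0 = None"
  by (simp_all add: ins_def)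

lemma ext_cases: "P (ext p G 0) \<Longrightarrow> (\<And>y. P (ext p G (Suc y))) \<Longrightarrow> P (ext p G y)"
  by (cases y) auto

lemma comb_ext: "comb G F \<Gamma> \<Longrightarrow> comb (ext p G) (ins 0 F) (ext p \<Gamma>)"
  unfolding comb_def
proof
  fix y assume h: "\<forall>y. (G y \<in> LD \<and> F y = None \<and> \<Gamma> y = G y) \<or> (F y \<in> LD \<and> G y = None \<and> \<Gamma> y = F y)
      \<or> (G y \<notin> LD \<and> \<Gamma> y = G y \<and> (F y = None \<or> F y = G y))"
  show "(ext p G y \<in> LD \<and> ins 0 F y = None \<and> ext p \<Gamma> y = ext p G y) \<or> (ins 0 F y \<in> LD \<and> ext p G y = None \<and> ext p \<Gamma> y = ins 0 F y)
      \<or> (ext p G y \<notin> LD \<and> ext p \<Gamma> y = ext p G y \<and> (ins 0 F y = None \<or> ins 0 F y = ext p G y))"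
    using h by (cases y) auto
qed

lemma combH_ext: "combH G F \<Gamma> \<Longrightarrow> combH (ext p G) (ins 0 F) (ext p \<Gamma>)"
  unfolding combH_def
proof
  fix y assume h: "\<forall>y. (F y = Some PDown \<and> G y = None \<and> \<Gamma> y = Some PHash)
      \<or> (F y \<noteq> Some PDown \<and> \<Gamma> y = G y \<and> (F y = None \<or> (F y = G y \<and> G y \<notin> LD)))"
  show "(ins 0 F y = Some PDown \<and> ext p G y = None \<and> ext p \<Gamma> y = Some PHash)
      \<or> (ins 0 F y \<noteq> Some PDown \<and> ext p \<Gamma> y = ext p G y \<and> (ins 0 F y = None \<or> (ins 0 F y = ext p G y \<and> ext p G y \<notin> LD)))"
    using h by (cases y) auto
qed

lemma dcondU_ext: "dcondU G D \<Longrightarrow> dcondU (ext p G) (ins 0 D)"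
  unfolding dcondU_def by (metis ext_Suc ins0_0 ins0_Suc not0_implies_Suc)

lemma dcondT_ext: "dcondT G D \<Longrightarrow> dcondT (ext p G) (ins 0 D)"
  unfolding dcondT_def by (metis ext_Suc ins0_0 ins0_Suc not0_implies_Suc)

lemma scond_ext: "scond GM k N \<Gamma> \<Longrightarrow> scond (ext p GM) (Suc k) (lift 0 N) (ext p \<Gamma>)"
  unfolding scond_def dk_ext ext_Suc
  using comb_ext combH_ext dcondU_ext dcondT_ext boxi_env_ins[of _ _ 0] ty_lift[of _ N 0]
  by (elim disjE; (elim conjE exE)?) (auto 0 0; blast)+


lemma app_split_dk: "app_split GM GM1 GM2 \<Longrightarrow> app_split (dk k GM) (dk k GM1) (dk k GM2)"
  unfolding app_split_def dk_def by blast

lemma app_split_sym: "app_split G G1 G2 \<Longrightarrow> app_split G G2 G1"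
  unfolding app_split_def by blast

lemma comb_split:
  assumes "app_split G G1 G2" "comb G F \<Gamma>"
  shows "app_split \<Gamma> (\<lambda>y. if \<Gamma> y \<in> LD \<and> G2 y \<noteq> None then None else \<Gamma> y) G2 \<and>
         comb G1 F (\<lambda>y. if \<Gamma> y \<in> LD \<and> G2 y \<noteq> None then None else \<Gamma> y)"
  unfolding app_split_def comb_def
  apply (rule conjI; rule allI)
  subgoal for y using app_splitD[OF assms(1), of y] assms(2)[unfolded comb_def, THEN spec, of y] unfolding LD_def
    by (cases "G y" rule: popt_cases; cases "F y" rule: popt_cases) auto
  subgoal for y using app_splitD[OF assms(1), of y] assms(2)[unfolded comb_def, THEN spec, of y] unfolding LD_def
    by (cases "G y" rule: popt_cases; cases "F y" rule: popt_cases) auto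
  done

lemma combH_split:
  assumes "app_split G G1 G2" "combH G F \<Gamma>"
  shows "app_split \<Gamma> (\<lambda>y. if F y = Some PDown then Some PHash else G1 y) (\<lambda>y. if F y = Some PDown then Some PHash else G2 y) \<and>
         combH G1 F (\<lambda>y. if F y = Some PDown then Some PHash else G1 y) \<and>
         combH G2 F (\<lambda>y. if F y = Some PDown then Some PHash else G2 y)"
  unfolding app_split_def combH_def
  apply (rule conjI; (rule conjI)?; rule allI)
  subgoal for y using app_splitD[OF assms(1), of y] assms(2)[unfolded combH_def, THEN spec, of y] unfolding LD_def
    by (cases "G y" rule: popt_cases; cases "F y" rule: popt_cases) auto
  subgoal for y using app_splitD[OF assms(1), of y] assms(2)[unfolded combH_def, THEN spec, of y] unfolding LD_def
    by (cases "G y" rule: popt_cases; cases "F y" rule: popt_cases) auto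
  subgoal for y using app_splitD[OF assms(1), of y] assms(2)[unfolded combH_def, THEN spec, of y] unfolding LD_def
    by (cases "G y" rule: popt_cases; cases "F y" rule: popt_cases) auto
  done

lemma dcondU_split: assumes "app_split G G1 G2" "dcondU G D" shows "dcondU G1 D \<and> dcondU G2 D"
  unfolding dcondU_def
  apply (rule conjI; rule allI)
  subgoal for y using app_splitD[OF assms(1), of y] assms(2)[unfolded dcondU_def, THEN spec, of y] by auto
  subgoal for y using app_splitD[OF assms(1), of y] assms(2)[unfolded dcondU_def, THEN spec, of y] by auto
  done

lemma dcondT_split: assumes "app_split G G1 G2" "dcondT G D" shows "dcondT G1 D \<and> dcondT G2 D"
  unfolding dcondT_def
  apply (rule conjI; rule allI)
  subgoal for y using app_splitD[OF assms(1), of y] assms(2)[unfolded dcondT_def, THEN spec, of y] by auto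
  subgoal for y using app_splitD[OF assms(1), of y] assms(2)[unfolded dcondT_def, THEN spec, of y] by auto
  done


lemma scond_app:
  assumes as: "app_split GM GM1 GM2" and sc: "scond GM k N \<Gamma>"
  shows "\<exists>\<Gamma>1 \<Gamma>2. app_split \<Gamma> \<Gamma>1 \<Gamma>2 \<and> scond GM1 k N \<Gamma>1 \<and> scond GM2 k N \<Gamma>2"
proof -
  have ad: "app_split (dk k GM) (dk k GM1) (dk k GM2)" by (rule app_split_dk[OF as])
  have ak: "(GM k \<in> {Some PLin, Some PDown} \<longrightarrow>
        (GM1 k = GM k \<and> GM2 k = None) \<or> (GM1 k = None \<and> GM2 k = GM k)) \<and>
     (GM k \<notin> {Some PLin, Some PDown} \<longrightarrow> GM1 k = GM k \<and> GM2 k = GM k)" by (rule app_splitD[OF as])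
  from sc[unfolded scond_def] show ?thesis
  proof (elim disjE conjE exE)
    assume "GM k = None" "\<Gamma> = dk k GM"
    then show ?thesis using ad ak unfolding scond_def by auto
  next
    fix E assume h: "GM k = Some PLin" "ty E N" "comb (dk k GM) E \<Gamma>"
    show ?thesis
    proof (cases "GM1 k = Some PLin")
      case True
      with ak h have "GM2 k = None" by auto
      with comb_split[OF ad h(3)] True h(2) show ?thesis unfolding scond_def by blast
    next
      case False
      with ak h have k: "GM2 k = Some PLin" "GM1 k = None" by auto
      with comb_split[OF app_split_sym[OF ad] h(3)] h(2) show ?thesis unfolding scond_def
        by (blast intro: app_split_sym)
    qed
  next
    fix E F assume h: "GM k = Some PDown" "ty E N" "boxi_env F E" "comb (dk k GM) F \<Gamma>"
    show ?thesis
    proof (cases "GM1 k = Some PDown")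
      case True
      with ak h have "GM2 k = None" by auto
      with comb_split[OF ad h(4)] True h(2,3) show ?thesis unfolding scond_def by blast
    next
      case False
      with ak h have k: "GM2 k = Some PDown" "GM1 k = None" by auto
      with comb_split[OF app_split_sym[OF ad] h(4)] h(2,3) show ?thesis unfolding scond_def
        by (blast intro: app_split_sym)
    qed
  next
    fix E F assume h: "GM k = Some PHash" "ty E N" "boxi_env F E" "combH (dk k GM) F \<Gamma>"
    with ak have "GM1 k = Some PHash" "GM2 k = Some PHash" by auto
    with combH_split[OF ad h(4)] h(2,3) show ?thesis unfolding scond_def by blast
  next
    fix D assume h: "GM k = Some PUp" "\<Gamma> = dk k GM" "ty D N" "dcondU (dk k GM) D"
    with ak have "GM1 k = Some PUp" "GM2 k = Some PUp" by auto
    with dcondU_split[OF ad h(4)] h ad show ?thesis unfolding scond_def by blast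
  next
    fix D assume h: "GM k = Some PDag" "\<Gamma> = dk k GM" "ty D N" "dcondT (dk k GM) D"
    with ak have "GM1 k = Some PDag" "GM2 k = Some PDag" by auto
    with dcondT_split[OF ad h(4)] h ad show ?thesis unfolding scond_def by blast
  qed
qed


lemma boxi_env_dk: "boxi_env GM DM \<Longrightarrow> boxi_env (dk k GM) (dk k DM)"
  unfolding boxi_env_def dk_def by blast

lemma boxc_env_dk: "boxc_env GM DM \<Longrightarrow> boxc_env (dk k GM) (dk k DM)"
  unfolding boxc_env_def dk_def by blast

lemma boxi_env_fun: "boxi_env GM DM \<Longrightarrow> DM = boxi_f GM"
  using boxi_envD by blast

lemma boxc_env_fun: "boxc_env GM DM \<Longrightarrow> DM = boxc_f GM"
  using boxc_envD by blast

lemma dk_boxi: "dk k (boxi_f G) = boxi_f (dk k G)"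
  unfolding dk_def boxi_f_def by auto

lemma dk_boxc: "dk k (boxc_f G) = boxc_f (dk k G)"
  unfolding dk_def boxc_f_def by auto

lemma comb_boxi:
  assumes "boxi_env F E" "\<And>y. G y \<noteq> Some PLin" "comb G F \<Gamma>"
  shows "(\<forall>y. \<Gamma> y \<noteq> Some PLin) \<and> comb (boxi_f G) E (boxi_f \<Gamma>)"
  unfolding comb_def
  apply (rule conjI; rule allI)
  subgoal for y using boxi_envD[OF assms(1), of y] assms(2)[of y] assms(3)[unfolded comb_def, THEN spec, of y] unfolding LD_def boxi_f_def
    by (cases "G y" rule: popt_cases; cases "F y" rule: popt_cases) auto
  subgoal for y using boxi_envD[OF assms(1), of y] assms(2)[of y] assms(3)[unfolded comb_def, THEN spec, of y] unfolding LD_def boxi_f_def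
    by (cases "G y" rule: popt_cases; cases "F y" rule: popt_cases) auto
  done

lemma combH_boxi:
  assumes "boxi_env F E" "\<And>y. G y \<noteq> Some PLin" "combH G F \<Gamma>"
  shows "(\<forall>y. \<Gamma> y \<noteq> Some PLin) \<and> boxi_f \<Gamma> = boxi_f G"
  unfolding fun_eq_iff
  apply (rule conjI; rule allI)
  subgoal for y using boxi_envD[OF assms(1), of y] assms(2)[of y] assms(3)[unfolded combH_def, THEN spec, of y] unfolding LD_def boxi_f_def
    by (cases "G y" rule: popt_cases; cases "F y" rule: popt_cases) auto
  subgoal for y using boxi_envD[OF assms(1), of y] assms(2)[of y] assms(3)[unfolded combH_def, THEN spec, of y] unfolding LD_def boxi_f_def
    by (cases "G y" rule: popt_cases; cases "F y" rule: popt_cases) auto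
  done

lemma combH_boxc:
  assumes "boxi_env F E" "\<And>y. G y \<in> {None, Some PHash, Some PUp, Some PDag}" "combH G F \<Gamma>"
  shows "(\<forall>y. \<Gamma> y \<in> {None, Some PHash, Some PUp, Some PDag}) \<and> boxc_f \<Gamma> = boxc_f G"
  unfolding fun_eq_iff
  apply (rule conjI; rule allI)
  subgoal for y using boxi_envD[OF assms(1), of y] assms(2)[of y] assms(3)[unfolded combH_def, THEN spec, of y] unfolding LD_def boxc_f_def
    by (cases "G y" rule: popt_cases; cases "F y" rule: popt_cases) auto
  subgoal for y using boxi_envD[OF assms(1), of y] assms(2)[of y] assms(3)[unfolded combH_def, THEN spec, of y] unfolding LD_def boxc_f_def
    by (cases "G y" rule: popt_cases; cases "F y" rule: popt_cases) auto
  done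

lemma dcondU_boxi: "dcondU G D \<Longrightarrow> dcondU (boxi_f G) D"
  unfolding dcondU_def boxi_f_def by (auto split: option.splits pat.splits)
lemma dcondT_boxi: "dcondT G D \<Longrightarrow> dcondT (boxi_f G) D"
  unfolding dcondT_def boxi_f_def by (auto split: option.splits pat.splits)
lemma dcondU_boxc: "dcondU G D \<Longrightarrow> dcondT (boxc_f G) D"
  unfolding dcondU_def dcondT_def boxc_f_def by (auto split: option.splits pat.splits)
lemma dcondT_boxc: "dcondT G D \<Longrightarrow> dcondT (boxc_f G) D"
  unfolding dcondT_def boxc_f_def by (auto split: option.splits pat.splits)

lemma scond_mi:
  assumes bx: "boxi_env GM DM" and sc: "scond GM k N \<Gamma>"
  shows "\<exists>D\<Gamma>. boxi_env \<Gamma> D\<Gamma> \<and> scond DM k N D\<Gamma>"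
proof -
  have DM: "DM = boxi_f GM" by (rule boxi_env_fun[OF bx])
  have nl: "GM y \<noteq> Some PLin" for y using boxi_envD[OF bx] by blast
  have nl': "dk k GM y \<noteq> Some PLin" for y using nl unfolding dk_def by blast
  have dd: "dk k DM = boxi_f (dk k GM)" unfolding DM dk_boxi ..
  from sc[unfolded scond_def] show ?thesis
  proof (elim disjE conjE exE)
    assume "GM k = None" "\<Gamma> = dk k GM"
    then show ?thesis using boxi_env_dk[OF bx, of k] unfolding scond_def DM boxi_f_def by auto
  next
    fix E assume "GM k = Some PLin" then show ?thesis using nl by blast
  next
    fix E F assume h: "GM k = Some PDown" "ty E N" "boxi_env F E" "comb (dk k GM) F \<Gamma>"
    from comb_boxi[OF h(3) nl' h(4)] have c: "\<forall>y. \<Gamma> y \<noteq> Some PLin" "comb (boxi_f (dk k GM)) E (boxi_f \<Gamma>)" by auto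
    have "DM k = Some PLin" using h(1) unfolding DM boxi_f_def by simp
    then show ?thesis using boxi_envI[of \<Gamma>] c h(2) unfolding scond_def dd by blast
  next
    fix E F assume h: "GM k = Some PHash" "ty E N" "boxi_env F E" "combH (dk k GM) F \<Gamma>"
    from combH_boxi[OF h(3) nl' h(4)] have c: "\<forall>y. \<Gamma> y \<noteq> Some PLin" "boxi_f \<Gamma> = boxi_f (dk k GM)" by auto
    have "DM k = None" using h(1) unfolding DM boxi_f_def by simp
    then show ?thesis using boxi_envI[of \<Gamma>] c unfolding scond_def dd by metis
  next
    fix D assume h: "GM k = Some PUp" "\<Gamma> = dk k GM" "ty D N" "dcondU (dk k GM) D"
    have "DM k = Some PUp" using h(1) unfolding DM boxi_f_def by simp
    then show ?thesis using boxi_env_dk[OF bx, of k] h dcondU_boxi[OF h(4)] unfolding scond_def dd by auto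
  next
    fix D assume h: "GM k = Some PDag" "\<Gamma> = dk k GM" "ty D N" "dcondT (dk k GM) D"
    have "DM k = Some PDag" using h(1) unfolding DM boxi_f_def by simp
    then show ?thesis using boxi_env_dk[OF bx, of k] h dcondT_boxi[OF h(4)] unfolding scond_def dd by auto
  qed
qed

lemma scond_mc:
  assumes bx: "boxc_env GM DM" and sc: "scond GM k N \<Gamma>"
  shows "\<exists>D\<Gamma>. boxc_env \<Gamma> D\<Gamma> \<and> scond DM k N D\<Gamma>"
proof -
  have DM: "DM = boxc_f GM" by (rule boxc_env_fun[OF bx])
  have nl: "GM y \<in> {None, Some PHash, Some PUp, Some PDag}" for y using boxc_envD[OF bx] by blast
  have nl': "dk k GM y \<in> {None, Some PHash, Some PUp, Some PDag}" for y using nl unfolding dk_def by blast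
  have dd: "dk k DM = boxc_f (dk k GM)" unfolding DM dk_boxc ..
  from sc[unfolded scond_def] show ?thesis
  proof (elim disjE conjE exE)
    assume "GM k = None" "\<Gamma> = dk k GM"
    then show ?thesis using boxc_env_dk[OF bx, of k] unfolding scond_def DM boxc_f_def by auto
  next
    fix E assume "GM k = Some PLin" then show ?thesis using nl[of k] by simp
  next
    fix E F assume "GM k = Some PDown" then show ?thesis using nl[of k] by simp
  next
    fix E F assume h: "GM k = Some PHash" "ty E N" "boxi_env F E" "combH (dk k GM) F \<Gamma>"
    from combH_boxc[OF h(3) nl' h(4)] have c: "\<forall>y. \<Gamma> y \<in> {None, Some PHash, Some PUp, Some PDag}" "boxc_f \<Gamma> = boxc_f (dk k GM)" by auto
    have "DM k = None" using h(1) unfolding DM boxc_f_def by simp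
    then show ?thesis using boxc_envI[of \<Gamma>] c unfolding scond_def dd by metis
  next
    fix D assume h: "GM k = Some PUp" "\<Gamma> = dk k GM" "ty D N" "dcondU (dk k GM) D"
    have "DM k = Some PDag" using h(1) unfolding DM boxc_f_def by simp
    then show ?thesis using boxc_env_dk[OF bx, of k] h dcondU_boxc[OF h(4)] unfolding scond_def dd by auto
  next
    fix D assume h: "GM k = Some PDag" "\<Gamma> = dk k GM" "ty D N" "dcondT (dk k GM) D"
    have "DM k = Some PDag" using h(1) unfolding DM boxc_f_def by simp
    then show ?thesis using boxc_env_dk[OF bx, of k] h dcondT_boxc[OF h(4)] unfolding scond_def dd by auto
  qed
qed


lemma wk_comb:
  assumes "\<And>y. G y \<in> {None, Some PHash, Some PUp, Some PDag}" "comb G E \<Gamma>"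
  shows "wk E \<Gamma>"
  unfolding wk_def
  apply (rule allI)
  subgoal for y using assms(1)[of y] assms(2)[unfolded comb_def, THEN spec, of y] unfolding LD_def nonlin_def
    by (cases "G y" rule: popt_cases; cases "E y" rule: popt_cases) auto
  done

lemma wk_combH:
  assumes "\<And>y. G y \<in> {None, Some PHash, Some PUp, Some PDag}" "boxi_env F E" "combH G F \<Gamma>"
  shows "wk E \<Gamma>"
  unfolding wk_def
  apply (rule allI)
  subgoal for y using assms(1)[of y] boxi_envD[OF assms(2), of y] assms(3)[unfolded combH_def, THEN spec, of y] unfolding LD_def nonlin_def boxi_f_def
    by (cases "G y" rule: popt_cases; cases "F y" rule: popt_cases) auto
  done

lemma wk_dcondT:
  assumes "\<And>y. G y \<in> {None, Some PHash, Some PUp, Some PDag}" "dcondT G D"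
  shows "wk D G"
  unfolding wk_def
  apply (rule allI)
  subgoal for y using assms(1)[of y] assms(2)[unfolded dcondT_def, THEN spec, of y] unfolding nonlin_def
    by (cases "G y" rule: popt_cases) auto
  done

lemma var_env_dk:
  assumes "var_env p j GM" "j \<noteq> k"
  shows "var_env p (if k < j then j - 1 else j) (dk k GM)"
  unfolding var_env_def dk_def
proof (intro conjI allI impI)
  have "(if (if k < j then j - 1 else j) < k then (if k < j then j - 1 else j) else Suc (if k < j then j - 1 else j)) = j"
    using assms(2) by auto
  then show "GM (if (if k < j then j - 1 else j) < k then (if k < j then j - 1 else j) else Suc (if k < j then j - 1 else j)) = Some p"
    using assms(1) unfolding var_env_def by simp
next
  fix y assume "y \<noteq> (if k < j then j - 1 else j)"
  then have "(if y < k then y else Suc y) \<noteq> j" using assms(2) by auto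
  then show "GM (if y < k then y else Suc y) \<in> {None, Some PHash, Some PUp, Some PDag}"
    using assms(1) unfolding var_env_def by blast
qed

lemma var_env_combH:
  assumes "var_env p j' G" "combH G F \<Gamma>"
  shows "var_env p j' \<Gamma>"
  unfolding var_env_def
proof (intro conjI allI impI)
  have "(F j' = Some PDown \<and> G j' = None \<and> \<Gamma> j' = Some PHash)
      \<or> (F j' \<noteq> Some PDown \<and> \<Gamma> j' = G j' \<and> (F j' = None \<or> (F j' = G j' \<and> G j' \<notin> LD)))"
    using assms(2) unfolding combH_def by blast
  then show "\<Gamma> j' = Some p" using assms(1) unfolding var_env_def by auto
next
  fix y assume "y \<noteq> j'"
  have "(F y = Some PDown \<and> G y = None \<and> \<Gamma> y = Some PHash)
      \<or> (F y \<noteq> Some PDown \<and> \<Gamma> y = G y \<and> (F y = None \<or> (F y = G y \<and> G y \<notin> LD)))"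
    using assms(2) unfolding combH_def by blast
  then show "\<Gamma> y \<in> {None, Some PHash, Some PUp, Some PDag}" using assms(1) \<open>y \<noteq> j'\<close> unfolding var_env_def by auto
qed

lemma scond_var:
  assumes ve: "var_env p j GM" and p: "p \<in> {PLin, PHash, PDag}" and sc: "scond GM k N \<Gamma>"
  shows "(j = k \<and> ty \<Gamma> N) \<or> (j \<noteq> k \<and> var_env p (if k < j then j - 1 else j) \<Gamma>)"
proof (cases "j = k")
  case True
  have nl: "dk k GM y \<in> {None, Some PHash, Some PUp, Some PDag}" for y
  proof -
    have "(if y < k then y else Suc y) \<noteq> j" using True by auto
    then show ?thesis using ve unfolding var_env_def dk_def by blast
  qed
  have gk: "GM k = Some p" using ve True unfolding var_env_def by simp
  from sc[unfolded scond_def] have "ty \<Gamma> N"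
  proof (elim disjE conjE exE)
    assume "GM k = None" then show ?thesis using gk by simp
  next
    fix E assume h: "GM k = Some PLin" "ty E N" "comb (dk k GM) E \<Gamma>"
    show ?thesis by (rule ty_wk[OF h(2) wk_comb[OF nl h(3)]])
  next
    fix E F assume "GM k = Some PDown" then show ?thesis using gk p by simp
  next
    fix E F assume h: "GM k = Some PHash" "ty E N" "boxi_env F E" "combH (dk k GM) F \<Gamma>"
    show ?thesis by (rule ty_wk[OF h(2) wk_combH[OF nl h(3,4)]])
  next
    fix D assume "GM k = Some PUp" then show ?thesis using gk p by simp
  next
    fix D assume h: "GM k = Some PDag" "\<Gamma> = dk k GM" "ty D N" "dcondT (dk k GM) D"
    show ?thesis unfolding h(2) by (rule ty_wk[OF h(3) wk_dcondT[OF nl h(4)]])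
  qed
  then show ?thesis using True by blast
next
  case False
  have gk: "GM k \<in> {None, Some PHash, Some PUp, Some PDag}" using ve False unfolding var_env_def by auto
  have vd: "var_env p (if k < j then j - 1 else j) (dk k GM)" by (rule var_env_dk[OF ve False])
  from sc[unfolded scond_def] have "var_env p (if k < j then j - 1 else j) \<Gamma>"
  proof (elim disjE conjE exE)
    fix E F assume h: "GM k = Some PHash" "ty E N" "boxi_env F E" "combH (dk k GM) F \<Gamma>"
    show ?thesis by (rule var_env_combH[OF vd h(4)])
  qed (use gk vd in auto)
  then show ?thesis using False by blast
qed


lemma ty_step_mono':
  "ty_step R G M \<Longrightarrow> (\<And>a b. R a b \<Longrightarrow> Q a b) \<Longrightarrow> ty_step Q G M"
  by (induction rule: ty_step.induct) (auto intro: ty_step.intros)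

lemma subst_var: "j \<noteq> k \<Longrightarrow> subst k N (Var j) = Var (if k < j then j - 1 else j)"
  by simp

lemma subst_step:
  assumes "ty_step ty GM M" "scond GM k N \<Gamma>"
   and co: "\<And>GM M k N \<Gamma>. ty GM M \<Longrightarrow> scond GM k N \<Gamma> \<Longrightarrow> Q \<Gamma> (subst k N M)"
   and tyQ: "\<And>G T. ty G T \<Longrightarrow> Q G T"
  shows "ty_step Q \<Gamma> (subst k N M)"
  using assms(1,2)
proof (induction arbitrary: k N \<Gamma> rule: ty_step.induct)
  case (vl x G)
  from scond_var[OF vl(1) _ vl(2)] have "x = k \<and> ty \<Gamma> N \<or> x \<noteq> k \<and> var_env PLin (if k < x then x - 1 else x) \<Gamma>" by simp
  then show ?case
  proof (elim disjE conjE)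
    assume "x = k" "ty \<Gamma> N"
    then show ?case using ty_step_mono'[OF ty_unfold[OF \<open>ty \<Gamma> N\<close>] tyQ] by simp
  next
    assume h: "x \<noteq> k" "var_env PLin (if k < x then x - 1 else x) \<Gamma>"
    show ?case unfolding subst_var[OF h(1)] by (rule ty_step.vl[OF h(2)])
  qed
next
  case (vd x G)
  from scond_var[OF vd(1) _ vd(2)] have "x = k \<and> ty \<Gamma> N \<or> x \<noteq> k \<and> var_env PHash (if k < x then x - 1 else x) \<Gamma>" by simp
  then show ?case
  proof (elim disjE conjE)
    assume "x = k" "ty \<Gamma> N"
    then show ?case using ty_step_mono'[OF ty_unfold[OF \<open>ty \<Gamma> N\<close>] tyQ] by simp
  next
    assume h: "x \<noteq> k" "var_env PHash (if k < x then x - 1 else x) \<Gamma>"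
    show ?case unfolding subst_var[OF h(1)] by (rule ty_step.vd[OF h(2)])
  qed
next
  case (va x G)
  from scond_var[OF va(1) _ va(2)] have "x = k \<and> ty \<Gamma> N \<or> x \<noteq> k \<and> var_env PDag (if k < x then x - 1 else x) \<Gamma>" by simp
  then show ?case
  proof (elim disjE conjE)
    assume "x = k" "ty \<Gamma> N"
    then show ?case using ty_step_mono'[OF ty_unfold[OF \<open>ty \<Gamma> N\<close>] tyQ] by simp
  next
    assume h: "x \<noteq> k" "var_env PDag (if k < x then x - 1 else x) \<Gamma>"
    show ?case unfolding subst_var[OF h(1)] by (rule ty_step.va[OF h(2)])
  qed
next
  case (a G G1 G2 M1 M2)
  from scond_app[OF a(1) a(6)] obtain \<Gamma>1 \<Gamma>2 where h: "app_split \<Gamma> \<Gamma>1 \<Gamma>2" "scond G1 k N \<Gamma>1" "scond G2 k N \<Gamma>2" by blast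
  show ?case by (simp only: subst_simps) (rule ty_step.a[OF h(1) a.IH(1)[OF h(2)] a.IH(2)[OF h(3)]])
next
  case (ll G M1)
  show ?case by (simp only: subst_simps) (rule ty_step.ll[OF ll.IH[OF scond_ext[OF ll(3)]]])
next
  case (li1 G M1)
  show ?case by (simp only: subst_simps) (rule ty_step.li1[OF li1.IH[OF scond_ext[OF li1(3)]]])
next
  case (li2 G M1)
  show ?case by (simp only: subst_simps) (rule ty_step.li2[OF li2.IH[OF scond_ext[OF li2(3)]]])
next
  case (lc G M1)
  show ?case by (simp only: subst_simps) (rule ty_step.lc[OF lc.IH[OF scond_ext[OF lc(3)]]])
next
  case (mi G D M1)
  from scond_mi[OF mi(1) mi(4)] obtain D\<Gamma> where h: "boxi_env \<Gamma> D\<Gamma>" "scond D k N D\<Gamma>" by blast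
  show ?case by (simp only: subst_simps) (rule ty_step.mi[OF h(1) mi.IH[OF h(2)]])
next
  case (mc G D M1)
  from scond_mc[OF mc(1) mc(3)] obtain D\<Gamma> where h: "boxc_env \<Gamma> D\<Gamma>" "scond D k N D\<Gamma>" by blast
  show ?case by (simp only: subst_simps) (rule ty_step.mc[where R=Q, OF h(1) co[OF mc(2) h(2)]])
qed

lemma ty_subst: "ty GM M \<Longrightarrow> scond GM k N \<Gamma> \<Longrightarrow> ty \<Gamma> (subst k N M)"
proof (coinduction arbitrary: GM M k N \<Gamma> rule: ty.coinduct)
  case (ty GM M k N \<Gamma>)
  have "ty_step (\<lambda>G T. (\<exists>GM M k N \<Gamma>. G = \<Gamma> \<and> T = subst k N M \<and> ty GM M \<and> scond GM k N \<Gamma>) \<or> ty G T) \<Gamma> (subst k N M)"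
  proof (rule subst_step[OF ty_unfold[OF ty(1)] ty(2)])
    fix GM M k N \<Gamma> assume "ty GM M" "scond GM k N \<Gamma>"
    then show "(\<exists>GM' M' k' N' \<Gamma>'. \<Gamma> = \<Gamma>' \<and> subst k N M = subst k' N' M' \<and> ty GM' M' \<and> scond GM' k' N' \<Gamma>') \<or> ty \<Gamma> (subst k N M)"
      by blast
  next
    fix G T assume "ty G T" then show "(\<exists>GM M k N \<Gamma>. G = \<Gamma> \<and> T = subst k N M \<and> ty GM M \<and> scond GM k N \<Gamma>) \<or> ty G T" by blast
  qed
  then show ?case by (intro exI[of _ \<Gamma>] exI[of _ "subst k N M"]) simp
qed



definition dh :: "env \<Rightarrow> env \<Rightarrow> bool" where
  "dh \<Gamma> \<Gamma>' \<longleftrightarrow> (\<forall>y. \<Gamma>' y = \<Gamma> y \<or> (\<Gamma> y = Some PDown \<and> \<Gamma>' y = Some PHash))"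

lemma dh_refl: "dh \<Gamma> \<Gamma>" unfolding dh_def by simp

lemma dk0_ext[simp]: "dk 0 (ext p G) = G"
  unfolding dk_def ext_def by simp

lemma comb_app_split: "app_split \<Gamma> \<Gamma>1 \<Gamma>2 \<Longrightarrow> comb \<Gamma>1 \<Gamma>2 \<Gamma>"
  unfolding comb_def
  apply (rule allI)
  subgoal for y using app_splitD[of \<Gamma> \<Gamma>1 \<Gamma>2 y] unfolding LD_def
    by (cases "\<Gamma> y" rule: popt_cases) auto
  done

lemma combH_app_split:
  assumes "app_split \<Gamma> \<Gamma>1 \<Gamma>2" "boxi_env \<Gamma>2 E"
  shows "combH \<Gamma>1 \<Gamma>2 (\<lambda>y. if \<Gamma>2 y = Some PDown then Some PHash else \<Gamma> y) \<and>
         dh \<Gamma> (\<lambda>y. if \<Gamma>2 y = Some PDown then Some PHash else \<Gamma> y)"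
  unfolding combH_def dh_def
  apply (rule conjI; rule allI)
  subgoal for y using app_splitD[OF assms(1), of y] boxi_envD[OF assms(2), of y] unfolding LD_def
    by (cases "\<Gamma> y" rule: popt_cases; cases "\<Gamma>2 y" rule: popt_cases) auto
  subgoal for y using app_splitD[OF assms(1), of y] boxi_envD[OF assms(2), of y] unfolding LD_def
    by (cases "\<Gamma> y" rule: popt_cases; cases "\<Gamma>2 y" rule: popt_cases) auto
  done

lemma boxc_app_split:
  assumes "app_split \<Gamma> \<Gamma>1 \<Gamma>2" "boxc_env \<Gamma>2 D"
  shows "\<Gamma>1 = \<Gamma> \<and> dcondU \<Gamma>1 D"
  unfolding dcondU_def fun_eq_iff
  apply (rule conjI; rule allI)
  subgoal for y using app_splitD[OF assms(1), of y] boxc_envD[OF assms(2), of y] unfolding boxc_f_def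
    by (cases "\<Gamma> y" rule: popt_cases; cases "\<Gamma>2 y" rule: popt_cases) auto
  subgoal for y using app_splitD[OF assms(1), of y] boxc_envD[OF assms(2), of y] unfolding boxc_f_def
    by (cases "\<Gamma> y" rule: popt_cases; cases "\<Gamma>2 y" rule: popt_cases) auto
  done

lemma sr_root:
  assumes "basic_red M P" "ty_step ty \<Gamma> M"
  shows "\<exists>\<Gamma>'. dh \<Gamma> \<Gamma>' \<and> ty \<Gamma>' P"
  using assms(1)
proof cases
  case (1 A B)
  from assms(2) obtain \<Gamma>1 \<Gamma>2 where h: "app_split \<Gamma> \<Gamma>1 \<Gamma>2" "ty_step ty \<Gamma>1 (Lam A)" "ty_step ty \<Gamma>2 B"
    unfolding 1 by (elim tsApp) blast
  from h(2) have hA: "ty_step ty (ext PLin \<Gamma>1) A" by (elim tsLam) blast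
  have "scond (ext PLin \<Gamma>1) 0 B \<Gamma>"
    unfolding scond_def using ty.intros[OF h(3)] comb_app_split[OF h(1)] by auto
  then have "ty \<Gamma> (subst 0 B A)" by (rule ty_subst[OF ty.intros[OF hA]])
  then show ?thesis unfolding 1 using dh_refl by blast
next
  case (2 A B)
  from assms(2) obtain \<Gamma>1 \<Gamma>2 where h: "app_split \<Gamma> \<Gamma>1 \<Gamma>2" "ty_step ty \<Gamma>1 (LamI A)" "ty_step ty \<Gamma>2 (BoxI B)"
    unfolding 2 by (elim tsApp) blast
  from h(3) obtain E where hB: "boxi_env \<Gamma>2 E" "ty_step ty E B" by (elim tsBoxI) blast
  from h(2) have "ty_step ty (ext PHash \<Gamma>1) A \<or> ty_step ty (ext PDown \<Gamma>1) A" by (elim tsLamI) blast+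
  then show ?thesis
  proof
    assume hA: "ty_step ty (ext PHash \<Gamma>1) A"
    define \<Gamma>' where "\<Gamma>' = (\<lambda>y. if \<Gamma>2 y = Some PDown then Some PHash else \<Gamma> y)"
    have c: "combH \<Gamma>1 \<Gamma>2 \<Gamma>'" "dh \<Gamma> \<Gamma>'" using combH_app_split[OF h(1) hB(1)] unfolding \<Gamma>'_def by auto
    have "scond (ext PHash \<Gamma>1) 0 B \<Gamma>'"
      unfolding scond_def using ty.intros[OF hB(2)] hB(1) c(1) by auto
    then have "ty \<Gamma>' (subst 0 B A)" by (rule ty_subst[OF ty.intros[OF hA]])
    then show ?thesis unfolding 2 using c(2) by blast
  next
    assume hA: "ty_step ty (ext PDown \<Gamma>1) A"
    have "scond (ext PDown \<Gamma>1) 0 B \<Gamma>"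
      unfolding scond_def using ty.intros[OF hB(2)] hB(1) comb_app_split[OF h(1)] by auto
    then have "ty \<Gamma> (subst 0 B A)" by (rule ty_subst[OF ty.intros[OF hA]])
    then show ?thesis unfolding 2 using dh_refl by blast
  qed
next
  case (3 A B)
  from assms(2) obtain \<Gamma>1 \<Gamma>2 where h: "app_split \<Gamma> \<Gamma>1 \<Gamma>2" "ty_step ty \<Gamma>1 (LamC A)" "ty_step ty \<Gamma>2 (BoxC B)"
    unfolding 3 by (elim tsApp) blast
  from h(3) obtain D where hB: "boxc_env \<Gamma>2 D" "ty D B" by (elim tsBoxC) blast
  from h(2) have hA: "ty_step ty (ext PUp \<Gamma>1) A" by (elim tsLamC) blast
  have c: "\<Gamma>1 = \<Gamma>" "dcondU \<Gamma>1 D" using boxc_app_split[OF h(1) hB(1)] by auto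
  have "scond (ext PUp \<Gamma>1) 0 B \<Gamma>"
    unfolding scond_def using hB(2) c by auto
  then have "ty \<Gamma> (subst 0 B A)" by (rule ty_subst[OF ty.intros[OF hA]])
  then show ?thesis unfolding 3 using dh_refl by blast
qed


lemma dh_app:
  assumes "app_split \<Gamma> \<Gamma>1 \<Gamma>2" "dh \<Gamma>1 \<Gamma>1'"
  shows "app_split (\<lambda>y. if \<Gamma>1 y = Some PDown \<and> \<Gamma>1' y = Some PHash then Some PHash else \<Gamma> y) \<Gamma>1'
            (\<lambda>y. if \<Gamma>1 y = Some PDown \<and> \<Gamma>1' y = Some PHash then Some PHash else \<Gamma>2 y) \<and>
         wk \<Gamma>2 (\<lambda>y. if \<Gamma>1 y = Some PDown \<and> \<Gamma>1' y = Some PHash then Some PHash else \<Gamma>2 y) \<and>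
         dh \<Gamma> (\<lambda>y. if \<Gamma>1 y = Some PDown \<and> \<Gamma>1' y = Some PHash then Some PHash else \<Gamma> y)"
  unfolding app_split_def wk_def dh_def
  apply (rule conjI; (rule conjI)?; rule allI)
  subgoal for y using app_splitD[OF assms(1), of y] assms(2)[unfolded dh_def, THEN spec, of y] unfolding nonlin_def
    by (cases "\<Gamma> y" rule: popt_cases; cases "\<Gamma>1 y" rule: popt_cases) auto
  subgoal for y using app_splitD[OF assms(1), of y] assms(2)[unfolded dh_def, THEN spec, of y] unfolding nonlin_def
    by (cases "\<Gamma> y" rule: popt_cases; cases "\<Gamma>1 y" rule: popt_cases) auto
  subgoal for y using app_splitD[OF assms(1), of y] assms(2)[unfolded dh_def, THEN spec, of y] unfolding nonlin_def
    by (cases "\<Gamma> y" rule: popt_cases; cases "\<Gamma>1 y" rule: popt_cases) auto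
  done

lemma dh_ext:
  assumes "dh (ext p \<Gamma>) G" "p \<noteq> PDown"
  shows "G = ext p (\<lambda>y. G (Suc y)) \<and> dh \<Gamma> (\<lambda>y. G (Suc y))"
proof
  have "G 0 = Some p" using assms unfolding dh_def by (metis ext_0 option.inject)
  then show "G = ext p (\<lambda>y. G (Suc y))" unfolding fun_eq_iff ext_def by (simp split: nat.splits)
  show "dh \<Gamma> (\<lambda>y. G (Suc y))" using assms(1) unfolding dh_def by (metis ext_Suc)
qed

lemma dh_ext_down:
  assumes "dh (ext PDown \<Gamma>) G"
  shows "(G = ext PDown (\<lambda>y. G (Suc y)) \<or> G = ext PHash (\<lambda>y. G (Suc y))) \<and> dh \<Gamma> (\<lambda>y. G (Suc y))"
proof
  have "G 0 = Some PDown \<or> G 0 = Some PHash" using assms unfolding dh_def by (metis ext_0)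
  then show "G = ext PDown (\<lambda>y. G (Suc y)) \<or> G = ext PHash (\<lambda>y. G (Suc y))"
    unfolding fun_eq_iff ext_def by (auto split: nat.splits)
  show "dh \<Gamma> (\<lambda>y. G (Suc y))" using assms(1) unfolding dh_def by (metis ext_Suc)
qed

lemma dh_boxi: "boxi_env \<Gamma> \<Delta> \<Longrightarrow> dh \<Delta> \<Delta>' \<Longrightarrow> \<Delta>' = \<Delta>"
  unfolding dh_def fun_eq_iff
proof
  fix y assume "boxi_env \<Gamma> \<Delta>" "\<forall>y. \<Delta>' y = \<Delta> y \<or> \<Delta> y = Some PDown \<and> \<Delta>' y = Some PHash"
  then show "\<Delta>' y = \<Delta> y" using boxi_envD[of \<Gamma> \<Delta> y] unfolding boxi_f_def
    by (cases "\<Gamma> y" rule: popt_cases) (auto dest: spec[of _ y])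
qed

lemma sr: "red0 M P \<Longrightarrow> ty_step ty \<Gamma> M \<Longrightarrow> \<exists>\<Gamma>'. dh \<Gamma> \<Gamma>' \<and> ty \<Gamma>' P"
proof (induction arbitrary: \<Gamma> rule: step.induct)
  case (root M N)
  then show ?case by (rule sr_root)
next
  case (appL M M' N)
  from appL(3) obtain \<Gamma>1 \<Gamma>2 where h: "app_split \<Gamma> \<Gamma>1 \<Gamma>2" "ty_step ty \<Gamma>1 M" "ty_step ty \<Gamma>2 N" by (elim tsApp) blast
  from appL.IH[OF h(2)] obtain \<Gamma>1' where h1: "dh \<Gamma>1 \<Gamma>1'" "ty \<Gamma>1' M'" by blast
  note d = dh_app[OF h(1) h1(1)]
  have "ty_step ty \<Gamma>1' M'" by (rule ty_unfold[OF h1(2)])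
  moreover have "ty_step ty (\<lambda>y. if \<Gamma>1 y = Some PDown \<and> \<Gamma>1' y = Some PHash then Some PHash else \<Gamma>2 y) N"
    using d ty_wk[OF ty.intros[OF h(3)]] ty_unfold by blast
  ultimately have "ty_step ty (\<lambda>y. if \<Gamma>1 y = Some PDown \<and> \<Gamma>1' y = Some PHash then Some PHash else \<Gamma> y) (App M' N)"
    using d ty_step.a by blast
  then show ?case using d ty.intros by blast
next
  case (appR N N' M)
  from appR(3) obtain \<Gamma>1 \<Gamma>2 where h: "app_split \<Gamma> \<Gamma>1 \<Gamma>2" "ty_step ty \<Gamma>1 M" "ty_step ty \<Gamma>2 N" by (elim tsApp) blast
  from appR.IH[OF h(3)] obtain \<Gamma>2' where h1: "dh \<Gamma>2 \<Gamma>2'" "ty \<Gamma>2' N'" by blast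
  note d = dh_app[OF app_split_sym[OF h(1)] h1(1)]
  have "ty_step ty \<Gamma>2' N'" by (rule ty_unfold[OF h1(2)])
  moreover have "ty_step ty (\<lambda>y. if \<Gamma>2 y = Some PDown \<and> \<Gamma>2' y = Some PHash then Some PHash else \<Gamma>1 y) M"
    using d ty_wk[OF ty.intros[OF h(2)]] ty_unfold by blast
  ultimately have "ty_step ty (\<lambda>y. if \<Gamma>2 y = Some PDown \<and> \<Gamma>2' y = Some PHash then Some PHash else \<Gamma> y) (App M N')"
    using d ty_step.a app_split_sym by blast
  then show ?case using d ty.intros by blast
next
  case (lam M M')
  from lam(3) have "ty_step ty (ext PLin \<Gamma>) M" by (elim tsLam) blast
  from lam.IH[OF this] obtain G where g: "dh (ext PLin \<Gamma>) G" "ty G M'" by blast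
  from dh_ext[OF g(1)] have e: "G = ext PLin (\<lambda>y. G (Suc y))" "dh \<Gamma> (\<lambda>y. G (Suc y))" by auto
  have "ty_step ty (\<lambda>y. G (Suc y)) (Lam M')" by (rule ty_step.ll, subst e(1)[symmetric], rule ty_unfold[OF g(2)])
  then show ?case using e(2) ty.intros by blast
next
  case (lamI M M')
  from lamI(3) have "ty_step ty (ext PHash \<Gamma>) M \<or> ty_step ty (ext PDown \<Gamma>) M" by (elim tsLamI) blast+
  then show ?case
  proof
    assume "ty_step ty (ext PHash \<Gamma>) M"
    from lamI.IH[OF this] obtain G where g: "dh (ext PHash \<Gamma>) G" "ty G M'" by blast
    from dh_ext[OF g(1)] have e: "G = ext PHash (\<lambda>y. G (Suc y))" "dh \<Gamma> (\<lambda>y. G (Suc y))" by auto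
    have "ty_step ty (\<lambda>y. G (Suc y)) (LamI M')" by (rule ty_step.li1, subst e(1)[symmetric], rule ty_unfold[OF g(2)])
    then show ?case using e(2) ty.intros by blast
  next
    assume "ty_step ty (ext PDown \<Gamma>) M"
    from lamI.IH[OF this] obtain G where g: "dh (ext PDown \<Gamma>) G" "ty G M'" by blast
    from dh_ext_down[OF g(1)] have e: "G = ext PDown (\<lambda>y. G (Suc y)) \<or> G = ext PHash (\<lambda>y. G (Suc y))" "dh \<Gamma> (\<lambda>y. G (Suc y))" by auto
    have "ty_step ty (\<lambda>y. G (Suc y)) (LamI M')"
      using e(1)
    proof
      assume e1: "G = ext PDown (\<lambda>y. G (Suc y))"
      show ?thesis by (rule ty_step.li2, subst e1[symmetric], rule ty_unfold[OF g(2)])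
    next
      assume e1: "G = ext PHash (\<lambda>y. G (Suc y))"
      show ?thesis by (rule ty_step.li1, subst e1[symmetric], rule ty_unfold[OF g(2)])
    qed
    then show ?case using e(2) ty.intros by blast
  qed
next
  case (lamC M M')
  from lamC(3) have "ty_step ty (ext PUp \<Gamma>) M" by (elim tsLamC) blast
  from lamC.IH[OF this] obtain G where g: "dh (ext PUp \<Gamma>) G" "ty G M'" by blast
  from dh_ext[OF g(1)] have e: "G = ext PUp (\<lambda>y. G (Suc y))" "dh \<Gamma> (\<lambda>y. G (Suc y))" by auto
  have "ty_step ty (\<lambda>y. G (Suc y)) (LamC M')" by (rule ty_step.lc, subst e(1)[symmetric], rule ty_unfold[OF g(2)])
  then show ?case using e(2) ty.intros by blast
next
  case (boxI M M')
  from boxI(3) obtain \<Delta> where h: "boxi_env \<Gamma> \<Delta>" "ty_step ty \<Delta> M" by (elim tsBoxI) blast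
  from boxI.IH[OF h(2)] obtain D where g: "dh \<Delta> D" "ty D M'" by blast
  have "D = \<Delta>" by (rule dh_boxi[OF h(1) g(1)])
  then have "ty_step ty \<Gamma> (BoxI M')" using ty_step.mi[OF h(1)] ty_unfold[OF g(2)] by simp
  then show ?case using dh_refl ty.intros by blast
next
  case (boxC M M')
  then show ?case by simp
qed

lemma dh_env_ok: "dh \<Gamma> \<Gamma>' \<Longrightarrow> env_ok \<Gamma> \<Longrightarrow> env_ok \<Gamma>'"
proof -
  assume "dh \<Gamma> \<Gamma>'" "env_ok \<Gamma>"
  then have "{i. \<Gamma>' i \<noteq> None} = {i. \<Gamma> i \<noteq> None}" unfolding dh_def
    by (metis (mono_tags, lifting) option.distinct(1))
  then show ?thesis using \<open>env_ok \<Gamma>\<close> unfolding env_ok_def by simp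
qed

theorem mainTheorem19:
  assumes "is_term M" and "leads M N" and "red0 N L"
  shows "\<exists>P. is_term P \<and> red0 M P \<and> leads P L"
proof -
  from assms(1) obtain \<Gamma> where g: "env_ok \<Gamma>" "ty \<Gamma> M" unfolding is_term_def by blast
  from commute[OF assms(3) assms(2) ty_unfold[OF g(2)]] obtain P where p: "red0 M P" "leads P L" by blast
  from sr[OF p(1) ty_unfold[OF g(2)]] obtain \<Gamma>' where "dh \<Gamma> \<Gamma>'" "ty \<Gamma>' P" by blast
  then have "is_term P" unfolding is_term_def using dh_env_ok[OF _ g(1)] by blast
  then show ?thesis using p by blast
qed


end
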